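(* Let $K$ be a precubical set. The identity map of $|K|_{geom}$ induces a map of multipointed $d$-spaces $|K|^t\to|K|$ from the tame realization of $K$ to the realization of $K$, and this map induces an isomorphism of directed spaces $\vec{\mathrm{Sp}}(|K|^t)\cong\vec{\mathrm{Sp}}(|K|)$.
   Context: $\mathbf{Top}$ is the category of $\Delta$-generated spaces (or $\Delta$-Hausdorff $\Delta$-generated spaces). $\mathcal{M}(\ell,\ell')$: non-decreasing surjective continuous maps $[0,\ell]\to[0,\ell']$; $\mathcal{I}(\ell)$: non-decreasing continuous maps $[0,1]\to[0,\ell]$; $\mu_\ell(t)=t/\ell$. Moore composition $\gamma_1*\gamma_2$ of paths $[0,\ell_1]\to U$, $[0,\ell_2]\to U$ is the concatenated path of length $\ell_1+\ell_2$; normalized composition of $\gamma_1,\gamma_2:[0,1]\to U$ is $(\gamma_1\mu_{1/2})*(\gamma_2\mu_{1/2})$. A multipointed $d$-space $X=(|X|,X^0,\mathbb{P}^{\mathrm{top}}X)$ is a space, a subset of states and a set of continuous maps $[0,1]\to|X|$ (execution paths) with endpoints in $X^0$, closed under precomposition by $\mathcal{M}(1,1)$ and under normalized composition; maps preserve states and execution paths. This category is cocomplete. A directed space is $(|Y|,d(Y))$ with $d(Y)$ a set of paths $[0,1]\to|Y|$ containing constants, closed under normalized composition and precomposition by $\mathcal{I}(1)$. $\vec{\mathrm{Sp}}(X)$ is the directed space $(|X|,d(X))$ where $d(X)$ consists of constant paths and Moore compositions $(\gamma_1\phi_1\mu_{\ell_1})*\dots*(\gamma_n\phi_n\mu_{\ell_n})$,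 $n\ge1$, $\ell_i>0$, $\sum\ell_i=1$, $\gamma_i$ execution paths, $\phi_i\in\mathcal{I}(1)$. Precubical sets: let $[n]=\{0,1\}^n$ ($[0]=\{()\}$), $\delta_i^\alpha(\epsilon_1,\dots,\epsilon_{n-1})=(\epsilon_1,\dots,\epsilon_{i-1},\alpha,\epsilon_i,\dots,\epsilon_{n-1})$ for $1\le i\le n$, $\alpha\in\{0,1\}$; $\square$ is the subcategory of sets with objects $[n]$, $n\ge0$, generated by the $\delta_i^\alpha$. A precubical set is a presheaf $K$ on $\square$, $K_n=K([n])$. Since $[n]\mapsto[0,1]^n$ (with the same formulas for $\delta_i^\alpha$) is a functor $\square\to\mathbf{Top}$, set $|K|_{geom}=\int^{[n]}K_n\cdot[0,1]^n$; for $c\in K_n$ let $|c|_{geom}:[0,1]^n\to|K|_{geom}$ be the corresponding map. A directed path of $[0,1]^n$ is a continuous path non-decreasing in each coordinate; it is tame if its endpoints lie in $\{0,1\}^n$. A directed path of $|K|_{geom}$ is a Moore composition $(|c_1|_{geom}\gamma_1)*\dots*(|c_p|_{geom}\gamma_p)$, $p\ge1$, with each $\gamma_i$ a directed path of $[0,1]^{\dim c_i}$. For $n\ge1$, $|\square[n]|^t$ is the multipointed $d$-space with underlying space $[0,1]^n$, states $\{0,1\}^n$, and, for states $\underline a<\underline b$ (coordinatewise, $\underline a\neq\underline b$), execution paths from $\underline a$ to $\underline b$ all directed paths $[0,1]\to[0,1]^n$ from $\underline a$ to $\underline b$, and no execution paths from $\underline a$ to $\underline b$ otherwise; $|\square[0]|^t$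 is the point. This gives a functor $\square\to$ multipointed $d$-spaces, and the tame realization is $|K|^t=\int^{[n]\in\square}K_n\cdot|\square[n]|^t$ (underlying space $|K|_{geom}$). The realization $|K|$ is the multipointed $d$-space with underlying space $|K|_{geom}$, set of states $K_0$, and whose execution paths from $\alpha$ to $\beta$ are the non-constant directed paths $[0,1]\to|K|_{geom}$ from $\alpha$ to $\beta$. *)

theory Defs
  imports "HOL-Analysis.Analysis"
begin

text \<open>Paths [0,1] -> U are functions real => 'b that are undefined outside [0,1]
  (extensional), so that sets of paths are compared extensionally on [0,1].\<close>

definition unit_path :: "(real \<Rightarrow> 'b) \<Rightarrow> real \<Rightarrow> 'b" where
  "unit_path f = restrict f {0..1}"

definition I1 :: "(real \<Rightarrow> real) set" where
  "I1 = {\<phi>. continuous_on {0..1} \<phi> \<and> mono_on {0..1} \<phi> \<and> \<phi> ` {0..1} \<subseteq> {0..1}}"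

definition M11 :: "(real \<Rightarrow> real) set" where
  "M11 = {\<phi>. continuous_on {0..1} \<phi> \<and> mono_on {0..1} \<phi> \<and> \<phi> ` {0..1} = {0..1}}"

definition normcomp :: "(real \<Rightarrow> 'b) \<Rightarrow> (real \<Rightarrow> 'b) \<Rightarrow> real \<Rightarrow> 'b" where
  "normcomp g1 g2 = unit_path (\<lambda>t. if t \<le> 1/2 then g1 (2*t) else g2 (2*t - 1))"

text \<open>Moore composition of a list of Moore paths (l_i, f_i), f_i : [0,l_i] -> U\<close>
fun moore :: "(real \<times> (real \<Rightarrow> 'b)) list \<Rightarrow> real \<Rightarrow> 'b" where
  "moore [] t = undefined"
| "moore [(l, f)] t = f t"
| "moore ((l, f) # p # ps) t = (if t \<le> l then f t else moore (p # ps) (t - l))"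

definition composable :: "(real \<times> (real \<Rightarrow> 'b)) list \<Rightarrow> bool" where
  "composable ps \<longleftrightarrow> (\<forall>i. Suc i < length ps \<longrightarrow> snd (ps!i) (fst (ps!i)) = snd (ps!Suc i) 0)"

record 'b mpds =
  mspace :: "'b topology"
  mstates :: "'b set"
  mpaths :: "(real \<Rightarrow> 'b) set"

definition is_mpds :: "'b mpds \<Rightarrow> bool" where
  "is_mpds X \<longleftrightarrow>
     mstates X \<subseteq> topspace (mspace X) \<and>
     (\<forall>\<gamma>\<in>mpaths X. \<gamma> \<in> extensional {0..1} \<and>
        continuous_map (top_of_set {0..1}) (mspace X) \<gamma> \<and>
        \<gamma> 0 \<in> mstates X \<and> \<gamma> 1 \<in> mstates X) \<and>
     (\<forall>\<gamma>\<in>mpaths X. \<forall>\<phi>\<in>M11. unit_path (\<gamma> \<circ> \<phi>) \<in> mpaths X) \<and>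
     (\<forall>\<gamma>1\<in>mpaths X. \<forall>\<gamma>2\<in>mpaths X. \<gamma>1 1 = \<gamma>2 0 \<longrightarrow> normcomp \<gamma>1 \<gamma>2 \<in> mpaths X)"

definition mpds_map :: "'b mpds \<Rightarrow> 'c mpds \<Rightarrow> ('b \<Rightarrow> 'c) \<Rightarrow> bool" where
  "mpds_map X Y f \<longleftrightarrow> is_mpds X \<and> is_mpds Y \<and>
     continuous_map (mspace X) (mspace Y) f \<and>
     f ` mstates X \<subseteq> mstates Y \<and>
     (\<forall>\<gamma>\<in>mpaths X. unit_path (f \<circ> \<gamma>) \<in> mpaths Y)"

record 'b dspace =
  dtop :: "'b topology"
  dpaths :: "(real \<Rightarrow> 'b) set"

definition is_dspace :: "'b dspace \<Rightarrow> bool" where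
  "is_dspace Y \<longleftrightarrow>
     (\<forall>\<gamma>\<in>dpaths Y. \<gamma> \<in> extensional {0..1} \<and>
        continuous_map (top_of_set {0..1}) (dtop Y) \<gamma>) \<and>
     (\<forall>x\<in>topspace (dtop Y). unit_path (\<lambda>_. x) \<in> dpaths Y) \<and>
     (\<forall>\<gamma>1\<in>dpaths Y. \<forall>\<gamma>2\<in>dpaths Y. \<gamma>1 1 = \<gamma>2 0 \<longrightarrow> normcomp \<gamma>1 \<gamma>2 \<in> dpaths Y) \<and>
     (\<forall>\<gamma>\<in>dpaths Y. \<forall>\<phi>\<in>I1. unit_path (\<gamma> \<circ> \<phi>) \<in> dpaths Y)"

definition dspace_iso :: "'b dspace \<Rightarrow> 'c dspace \<Rightarrow> ('b \<Rightarrow> 'c) \<Rightarrow> bool" where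
  "dspace_iso A B f \<longleftrightarrow> is_dspace A \<and> is_dspace B \<and>
     (\<exists>g. homeomorphic_maps (dtop A) (dtop B) f g \<and>
          (\<forall>\<gamma>\<in>dpaths A. unit_path (f \<circ> \<gamma>) \<in> dpaths B) \<and>
          (\<forall>\<gamma>\<in>dpaths B. unit_path (g \<circ> \<gamma>) \<in> dpaths A))"

definition Sp :: "'b mpds \<Rightarrow> 'b dspace" where
  "Sp X = \<lparr> dtop = mspace X,
     dpaths = {unit_path (\<lambda>_. x) | x. x \<in> topspace (mspace X)} \<union>
       {unit_path (moore ps) | ps. ps \<noteq> [] \<and> composable ps \<and>
          sum_list (map fst ps) = 1 \<and>
          (\<forall>(l, f)\<in>set ps. l > 0 \<and>
             (\<exists>\<gamma>\<in>mpaths X. \<exists>\<phi>\<in>I1. \<forall>t\<in>{0..l}. f t = \<gamma> (\<phi> (t / l))))} \<rparr>"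

text \<open>Points of [0,1]^n are represented as functions nat => real vanishing from index n on
  (coordinates 0..n-1); the topology is the product topology.\<close>

definition cube :: "nat \<Rightarrow> (nat \<Rightarrow> real) set" where
  "cube n = {x. (\<forall>i<n. 0 \<le> x i \<and> x i \<le> 1) \<and> (\<forall>i\<ge>n. x i = 0)}"

definition verts :: "nat \<Rightarrow> (nat \<Rightarrow> real) set" where
  "verts n = {x \<in> cube n. \<forall>i<n. x i = 0 \<or> x i = 1}"

text \<open>delta_i^alpha (1 <= i <= n) : inserts alpha at position i\<close>
definition delta :: "nat \<Rightarrow> bool \<Rightarrow> (nat \<Rightarrow> real) \<Rightarrow> (nat \<Rightarrow> real)" where
  "delta i a x = (\<lambda>k. if Suc k < i then x k else if Suc k = i then (if a then 1 else 0) else x (k - 1))"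

text \<open>A word (i_1,a_1)...(i_k,a_k) denotes delta_{i_1}^{a_1} o ... o delta_{i_k}^{a_k} : [m] -> [m+k]\<close>
fun apply_word :: "(nat \<times> bool) list \<Rightarrow> (nat \<Rightarrow> real) \<Rightarrow> (nat \<Rightarrow> real)" where
  "apply_word [] x = x"
| "apply_word ((i, a) # w) x = delta i a (apply_word w x)"

fun valid_word :: "nat \<Rightarrow> (nat \<times> bool) list \<Rightarrow> bool" where
  "valid_word m [] = True"
| "valid_word m ((i, a) # w) = (valid_word m w \<and> 1 \<le> i \<and> i \<le> m + length w + 1)"

text \<open>A presheaf on the box category, given by its cells K_n and the action
  face n i a = K(delta_i^a) : K_n -> K_(n-1) of the generators.\<close>
record 'a precub =
  cells :: "nat \<Rightarrow> 'a set"
  face :: "nat \<Rightarrow> nat \<Rightarrow> bool \<Rightarrow> 'a \<Rightarrow> 'a"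

text \<open>K(f) : K_(m+length w) -> K_m for the morphism f denoted by the word w\<close>
fun face_word :: "'a precub \<Rightarrow> nat \<Rightarrow> (nat \<times> bool) list \<Rightarrow> 'a \<Rightarrow> 'a" where
  "face_word K m [] c = c"
| "face_word K m ((i, a) # w) c = face_word K m w (face K (m + length w + 1) i a c)"

text \<open>K is a presheaf on the box category: the generators act between the right sets,
  and the action is well defined on morphisms, i.e. two words denoting the same map of
  sets [m] -> [n] act in the same way (functoriality then holds by construction).\<close>
definition precubical :: "'a precub \<Rightarrow> bool" where
  "precubical K \<longleftrightarrow>
     (\<forall>n c i a. c \<in> cells K n \<and> 1 \<le> i \<and> i \<le> n \<longrightarrow> face K n i a c \<in> cells K (n - 1)) \<and>
     (\<forall>m w w'. valid_word m w \<and> valid_word m w' \<and> length w = length w' \<and>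
        (\<forall>x\<in>verts m. apply_word w x = apply_word w' x) \<longrightarrow>
        (\<forall>c\<in>cells K (m + length w). face_word K m w c = face_word K m w' c))"

type_synonym 'a gpt = "(nat \<times> 'a \<times> (nat \<Rightarrow> real)) set"

definition geo_pts :: "'a precub \<Rightarrow> (nat \<times> 'a \<times> (nat \<Rightarrow> real)) set" where
  "geo_pts K = {(n, c, x). c \<in> cells K n \<and> x \<in> cube n}"

text \<open>coend relation: (m, K(f) c, x) ~ (n, c, f x)\<close>
definition geo_rel :: "'a precub \<Rightarrow> (nat \<times> 'a \<times> (nat \<Rightarrow> real)) \<Rightarrow> (nat \<times> 'a \<times> (nat \<Rightarrow> real)) \<Rightarrow> bool" where
  "geo_rel K p q \<longleftrightarrow> (\<exists>m w c x. valid_word m w \<and> c \<in> cells K (m + length w) \<and> x \<in> cube m \<and>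
      p = (m, face_word K m w c, x) \<and> q = (m + length w, c, apply_word w x))"

definition geo_cls :: "'a precub \<Rightarrow> (nat \<times> 'a \<times> (nat \<Rightarrow> real)) \<Rightarrow> 'a gpt" where
  "geo_cls K p = {q \<in> geo_pts K. equivclp (geo_rel K) p q}"

definition geo_carrier :: "'a precub \<Rightarrow> 'a gpt set" where
  "geo_carrier K = geo_cls K ` geo_pts K"

definition cell_map :: "'a precub \<Rightarrow> nat \<Rightarrow> 'a \<Rightarrow> (nat \<Rightarrow> real) \<Rightarrow> 'a gpt" where
  "cell_map K n c x = geo_cls K (n, c, x)"

text \<open>final topology with respect to the maps |c|_geom (the coend in spaces)\<close>
definition geo_top :: "'a precub \<Rightarrow> 'a gpt topology" where
  "geo_top K = topology (\<lambda>U. U \<subseteq> geo_carrier K \<and>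
     (\<forall>n c. c \<in> cells K n \<longrightarrow>
        openin (top_of_set (cube n)) {x \<in> cube n. cell_map K n c x \<in> U}))"

definition dir_cube_path :: "nat \<Rightarrow> real \<Rightarrow> (real \<Rightarrow> (nat \<Rightarrow> real)) \<Rightarrow> bool" where
  "dir_cube_path n l \<gamma> \<longleftrightarrow> continuous_on {0..l} \<gamma> \<and> \<gamma> ` {0..l} \<subseteq> cube n \<and>
     (\<forall>i. mono_on {0..l} (\<lambda>t. \<gamma> t i))"

definition geo_dipaths :: "'a precub \<Rightarrow> (real \<Rightarrow> 'a gpt) set" where
  "geo_dipaths K = {unit_path (moore ps) | ps. ps \<noteq> [] \<and> composable ps \<and>
      sum_list (map fst ps) = 1 \<and>
      (\<forall>(l, f)\<in>set ps. l > 0 \<and> (\<exists>n c \<gamma>. c \<in> cells K n \<and> dir_cube_path n l \<gamma> \<and>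
          (\<forall>t\<in>{0..l}. f t = cell_map K n c (\<gamma> t))))}"

text \<open>|square[n]|^t (for n = 0 this is the point, without execution paths)\<close>
definition cube_mpds :: "nat \<Rightarrow> (nat \<Rightarrow> real) mpds" where
  "cube_mpds n = \<lparr> mspace = top_of_set (cube n), mstates = verts n,
     mpaths = {\<gamma>. \<gamma> \<in> extensional {0..1} \<and> dir_cube_path n 1 \<gamma> \<and>
        (\<exists>a\<in>verts n. \<exists>b\<in>verts n. (\<forall>i. a i \<le> b i) \<and> a \<noteq> b \<and> \<gamma> 0 = a \<and> \<gamma> 1 = b)} \<rparr>"

inductive_set tame_paths :: "'a precub \<Rightarrow> (real \<Rightarrow> 'a gpt) set" for K where
  base: "c \<in> cells K n \<Longrightarrow> \<gamma> \<in> mpaths (cube_mpds n) \<Longrightarrow>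
           unit_path (cell_map K n c \<circ> \<gamma>) \<in> tame_paths K"
| reparam: "\<gamma> \<in> tame_paths K \<Longrightarrow> \<phi> \<in> M11 \<Longrightarrow> unit_path (\<gamma> \<circ> \<phi>) \<in> tame_paths K"
| comp: "\<gamma>1 \<in> tame_paths K \<Longrightarrow> \<gamma>2 \<in> tame_paths K \<Longrightarrow> \<gamma>1 1 = \<gamma>2 0 \<Longrightarrow>
           normcomp \<gamma>1 \<gamma>2 \<in> tame_paths K"

definition tame_real :: "'a precub \<Rightarrow> 'a gpt mpds" where
  "tame_real K = \<lparr> mspace = geo_top K,
     mstates = {cell_map K n c v | n c v. c \<in> cells K n \<and> v \<in> verts n},
     mpaths = tame_paths K \<rparr>"

definition realization :: "'a precub \<Rightarrow> 'a gpt mpds" where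
  "realization K = \<lparr> mspace = geo_top K,
     mstates = {cell_map K 0 v (\<lambda>_. 0) | v. v \<in> cells K 0},
     mpaths = {\<gamma> \<in> geo_dipaths K.
        \<gamma> 0 \<in> {cell_map K 0 v (\<lambda>_. 0) | v. v \<in> cells K 0} \<and>
        \<gamma> 1 \<in> {cell_map K 0 v (\<lambda>_. 0) | v. v \<in> cells K 0} \<and>
        \<not> (\<forall>t\<in>{0..1}. \<gamma> t = \<gamma> 0)} \<rparr>"

end

theory Submission
  imports Defs
begin

definition good :: "(real \<Rightarrow> (real \<Rightarrow> 'b) \<Rightarrow> bool) \<Rightarrow> (real \<times> (real \<Rightarrow> 'b)) list \<Rightarrow> bool" where
  "good P ps \<longleftrightarrow> ps \<noteq> [] \<and> composable ps \<and> (\<forall>(l, f)\<in>set ps. l > 0 \<and> P l f)"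

definition rclosed :: "(real \<Rightarrow> (real \<Rightarrow> 'b) \<Rightarrow> bool) \<Rightarrow> bool" where
  "rclosed P \<longleftrightarrow> (\<forall>l f l' \<psi>. P l f \<longrightarrow> l > 0 \<longrightarrow> l' > 0 \<longrightarrow> continuous_on {0..l'} \<psi> \<longrightarrow>
     mono_on {0..l'} \<psi> \<longrightarrow> \<psi> ` {0..l'} \<subseteq> {0..l} \<longrightarrow> P l' (f \<circ> \<psi>))"

abbreviation len :: "(real \<times> (real \<Rightarrow> 'b)) list \<Rightarrow> real" where
  "len ps \<equiv> sum_list (map fst ps)"

lemma moore_cons: "moore ((l, f) # ps) t = (if t \<le> l \<or> ps = [] then f t else moore ps (t - l))"
  by (cases ps) auto

lemma composable_Nil[simp]: "composable []" and composable_single[simp]: "composable [p]"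
  by (auto simp: composable_def)

lemma composable_cons:
  "composable ((l, f) # ps) \<longleftrightarrow> composable ps \<and> (ps \<noteq> [] \<longrightarrow> f l = snd (hd ps) 0)"
proof
  assume a: "composable ((l, f) # ps)"
  have "composable ps" unfolding composable_def
  proof (intro allI impI)
    fix i assume "Suc i < length ps"
    then show "snd (ps ! i) (fst (ps ! i)) = snd (ps ! Suc i) 0"
      using a[unfolded composable_def, rule_format, of "Suc i"] by simp
  qed
  moreover have "ps \<noteq> [] \<longrightarrow> f l = snd (hd ps) 0"
    using a[unfolded composable_def, rule_format, of 0] by (cases ps) auto
  ultimately show "composable ps \<and> (ps \<noteq> [] \<longrightarrow> f l = snd (hd ps) 0)" by blast
next
  assume a: "composable ps \<and> (ps \<noteq> [] \<longrightarrow> f l = snd (hd ps) 0)"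
  show "composable ((l, f) # ps)" unfolding composable_def
  proof (intro allI impI)
    fix i assume i: "Suc i < length ((l, f) # ps)"
    show "snd (((l, f) # ps) ! i) (fst (((l, f) # ps) ! i)) = snd (((l, f) # ps) ! Suc i) 0"
    proof (cases i)
      case 0 then show ?thesis using a i by (cases ps) auto
    next
      case (Suc j) then show ?thesis using a i by (auto simp: composable_def)
    qed
  qed
qed

lemma moore_0: "ps \<noteq> [] \<Longrightarrow> 0 \<le> fst (hd ps) \<Longrightarrow> moore ps 0 = snd (hd ps) 0"
  by (cases ps) (auto simp: moore_cons)

lemma good_cons: "good P ((l, f) # ps) \<longleftrightarrow> l > 0 \<and> P l f \<and> (ps = [] \<or> good P ps \<and> f l = snd (hd ps) 0)"
  by (auto simp: good_def composable_cons)

lemma good_len_pos: "good P ps \<Longrightarrow> len ps > 0"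
proof (induction ps)
  case Nil then show ?case by (simp add: good_def)
next
  case (Cons p ps) then show ?case
    by (cases p; cases "ps = []") (auto simp: good_cons add_pos_pos)
qed

lemma moore_end: "good P ps \<Longrightarrow> moore ps (len ps) = snd (last ps) (fst (last ps))"
proof (induction ps)
  case Nil then show ?case by (simp add: good_def)
next
  case (Cons p ps)
  obtain l f where p: "p = (l, f)" by fastforce
  show ?case
  proof (cases "ps = []")
    case True then show ?thesis using p by simp
  next
    case False
    then have "good P ps" "l > 0" using Cons.prems p by (auto simp: good_cons)
    moreover have "len ps > 0" using good_len_pos[OF \<open>good P ps\<close>] .
    ultimately show ?thesis using Cons.IH p False by (simp add: moore_cons)
  qed
qed

lemma moore_start: "good P ps \<Longrightarrow> moore ps 0 = snd (hd ps) 0"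
  by (cases ps) (auto simp: good_def moore_cons)

lemma moore_append:
  assumes "good P A" "B \<noteq> []"
  shows "moore (A @ B) t = (if t \<le> len A then moore A t else moore B (t - len A))"
  using assms
proof (induction A arbitrary: t)
  case Nil then show ?case by (simp add: good_def)
next
  case (Cons p A)
  obtain l f where p: "p = (l, f)" by fastforce
  show ?case
  proof (cases "A = []")
    case True then show ?thesis using p Cons.prems by (simp add: moore_cons)
  next
    case False
    then have g: "good P A" "l > 0" using Cons.prems p by (auto simp: good_cons)
    have "len A > 0" using good_len_pos[OF g(1)] .
    then show ?thesis using Cons.IH[OF g(1) Cons.prems(2)] p False g Cons.prems(2)
      by (auto simp: moore_cons algebra_simps)
  qed
qed

lemma good_append:
  assumes "good P A" "good P B" "snd (last A) (fst (last A)) = snd (hd B) 0"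
  shows "good P (A @ B)"
  using assms
proof (induction A)
  case Nil then show ?case by (simp add: good_def)
next
  case (Cons p A)
  obtain l f where p: "p = (l, f)" by fastforce
  show ?case
  proof (cases "A = []")
    case True then show ?thesis using p Cons.prems by (auto simp: good_cons good_def composable_cons)
  next
    case False
    then have g: "good P A" using Cons.prems p by (auto simp: good_cons)
    then show ?thesis using Cons.IH[OF g Cons.prems(2)] Cons.prems p False
      by (auto simp: good_cons)
  qed
qed

lemma rclosedD:
  assumes "rclosed P" "P l f" "l > 0" "l' > 0" "continuous_on {0..l'} \<psi>" "mono_on {0..l'} \<psi>"
    "\<And>t. t \<in> {0..l'} \<Longrightarrow> \<psi> t \<in> {0..l}"
  shows "P l' (f \<circ> \<psi>)"
  using assms unfolding rclosed_def by blast

lemma moore_reparam: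
  assumes rc: "rclosed P" and "good P ps" and "L' > 0" and "continuous_on {0..L'} \<psi>"
    and "mono_on {0..L'} \<psi>" and "\<And>t. t \<in> {0..L'} \<Longrightarrow> \<psi> t \<in> {0..len ps}"
  shows "\<exists>qs. good P qs \<and> len qs = L' \<and> (\<forall>t\<in>{0..L'}. moore qs t = moore ps (\<psi> t))"
  using assms(2-)
proof (induction ps arbitrary: L' \<psi>)
  case Nil then show ?case by (simp add: good_def)
next
  case (Cons p rest)
  obtain l f where p: "p = (l, f)" by fastforce
  have l: "l > 0" "P l f" using Cons.prems(1) p by (auto simp: good_cons)
  have mono: "\<psi> s \<le> \<psi> t" if "0 \<le> s" "s \<le> t" "t \<le> L'" for s t
    using mono_onD[OF Cons.prems(4)] that by auto
  show ?case
  proof (cases "rest = []")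
    case True
    have "P L' (f \<circ> \<psi>)"
      by (rule rclosedD[OF rc l(2) l(1) Cons.prems(2,3,4)]) (use Cons.prems(5) True p in auto)
    then show ?thesis
      by (intro exI[of _ "[(L', f \<circ> \<psi>)]"]) (use True p Cons.prems(2) in \<open>auto simp: good_def\<close>)
  next
    case False
    have gr: "good P rest" and fl: "f l = moore rest 0"
      using Cons.prems(1) p False by (auto simp: good_cons moore_start)
    have lenps: "len (p # rest) = l + len rest" using p by simp
    have R: "len rest > 0" using good_len_pos[OF gr] .
    consider "\<psi> L' \<le> l" | "l \<le> \<psi> 0" | "\<psi> 0 < l" "l < \<psi> L'" by linarith
    then show ?thesis
    proof cases
      case 1
      have rng: "\<psi> t \<in> {0..l}" if "t \<in> {0..L'}" for t
        using Cons.prems(5)[OF that] mono[of t L'] that 1 by auto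
      have "P L' (f \<circ> \<psi>)"
        by (rule rclosedD[OF rc l(2) l(1) Cons.prems(2,3,4) rng])
      moreover have "moore (p # rest) (\<psi> t) = f (\<psi> t)" if "t \<in> {0..L'}" for t
        using rng[OF that] p by (simp add: moore_cons)
      ultimately show ?thesis
        by (intro exI[of _ "[(L', f \<circ> \<psi>)]"]) (use Cons.prems(2) in \<open>auto simp: good_def\<close>)
    next
      case 2
      have rng: "\<psi> t \<ge> l" if "t \<in> {0..L'}" for t using mono[of 0 t] that 2 by auto
      have "\<exists>qs. good P qs \<and> len qs = L' \<and> (\<forall>t\<in>{0..L'}. moore qs t = moore rest ((\<lambda>t. \<psi> t - l) t))"
      proof (rule Cons.IH[OF gr Cons.prems(2)])
        show "continuous_on {0..L'} (\<lambda>t. \<psi> t - l)" by (intro continuous_intros Cons.prems(3))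
        show "mono_on {0..L'} (\<lambda>t. \<psi> t - l)" by (rule mono_onI) (use mono in auto)
        show "\<psi> t - l \<in> {0..len rest}" if "t \<in> {0..L'}" for t
          using rng[OF that] Cons.prems(5)[OF that] lenps by auto
      qed
      then obtain qs where qs: "good P qs" "len qs = L'" "\<forall>t\<in>{0..L'}. moore qs t = moore rest (\<psi> t - l)"
        by blast
      have "moore (p # rest) (\<psi> t) = moore rest (\<psi> t - l)" if "t \<in> {0..L'}" for t
      proof (cases "\<psi> t = l")
        case True then show ?thesis using p fl by (simp add: moore_cons)
      next
        case False then show ?thesis using rng[OF that] p \<open>rest \<noteq> []\<close> by (simp add: moore_cons)
      qed
      then show ?thesis using qs by auto
    next
      case 3
      obtain s where s: "0 \<le> s" "s \<le> L'" "\<psi> s = l"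
        using IVT'[of \<psi> 0 l L'] 3 Cons.prems(2,3) by auto
      have s0: "0 < s" "s < L'" using s 3 by (auto simp: less_le)
      have rng1: "\<psi> t \<in> {0..l}" if "t \<in> {0..s}" for t
        using Cons.prems(5)[of t] mono[of t s] that s by auto
      have P1: "P s (f \<circ> \<psi>)"
        by (rule rclosedD[OF rc l(2) l(1) s0(1) continuous_on_subset[OF Cons.prems(3)]
              mono_on_subset[OF Cons.prems(4)] rng1]) (use s in auto)
      have rng2: "\<psi> (t + s) \<ge> l" if "t \<ge> 0" "t + s \<le> L'" for t using mono[of s "t + s"] s that by auto
      have "\<exists>qs. good P qs \<and> len qs = L' - s \<and>
          (\<forall>t\<in>{0..L' - s}. moore qs t = moore rest ((\<lambda>t. \<psi> (t + s) - l) t))"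
      proof (rule Cons.IH[OF gr])
        show "L' - s > 0" using s0 by simp
        have "continuous_on {0..L' - s} (\<lambda>t. \<psi> (t + s))"
          by (rule continuous_on_compose2[OF Cons.prems(3)]) (use s(1) in \<open>auto intro!: continuous_intros\<close>)
        then show "continuous_on {0..L' - s} (\<lambda>t. \<psi> (t + s) - l)" by (intro continuous_intros)
        show "mono_on {0..L' - s} (\<lambda>t. \<psi> (t + s) - l)" by (rule mono_onI) (use mono s in auto)
        show "\<psi> (t + s) - l \<in> {0..len rest}" if "t \<in> {0..L' - s}" for t
          using rng2[of t] that Cons.prems(5)[of "t + s"] that lenps s by auto
      qed
      then obtain qs where qs: "good P qs" "len qs = L' - s"
        "\<forall>t\<in>{0..L' - s}. moore qs t = moore rest (\<psi> (t + s) - l)"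
        by blast
      have "moore qs 0 = moore rest (\<psi> (0 + s) - l)" using qs(3) s0 by auto
      then have q0: "snd (hd qs) 0 = f l"
        using moore_start[OF qs(1)] fl s by simp
      have g: "good P ((s, f \<circ> \<psi>) # qs)" using P1 s0 qs(1) q0 s by (auto simp: good_cons)
      have eq: "moore ((s, f \<circ> \<psi>) # qs) t = moore (p # rest) (\<psi> t)" if "t \<in> {0..L'}" for t
      proof (cases "t \<le> s")
        case True
        then have "\<psi> t \<le> l" using mono[of t s] that s by auto
        then show ?thesis using True p by (simp add: moore_cons)
      next
        case False
        then have ge: "\<psi> t \<ge> l" using mono[of s t] that s by auto
        have "moore ((s, f \<circ> \<psi>) # qs) t = moore rest (\<psi> t - l)"
          using False qs(3)[rule_format, of "t - s"] that qs(1) by (auto simp: moore_cons good_def)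
        also have "\<dots> = moore (p # rest) (\<psi> t)"
        proof (cases "\<psi> t = l")
          case True then show ?thesis using p fl by (simp add: moore_cons)
        next
          case False then show ?thesis using ge p \<open>rest \<noteq> []\<close> by (simp add: moore_cons)
        qed
        finally show ?thesis .
      qed
      show ?thesis using g qs(2) eq by (intro exI[of _ "(s, f \<circ> \<psi>) # qs"]) auto
    qed
  qed
qed

lemma len_pos_gen: "ps \<noteq> [] \<Longrightarrow> \<forall>(l, f)\<in>set ps. l > 0 \<and> Q l f \<Longrightarrow> len ps > 0"
proof (induction ps)
  case Nil then show ?case by simp
next
  case (Cons p ps)
  then show ?case by (cases "ps = []") (auto simp: add_pos_pos split: prod.splits)
qed

lemma moore_flatten:
  assumes "ps \<noteq> []" "composable ps"
    "\<forall>(l, f)\<in>set ps. l > 0 \<and> (\<exists>qs. good P qs \<and> len qs = l \<and> (\<forall>t\<in>{0..l}. moore qs t = f t))"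
  shows "\<exists>qs. good P qs \<and> len qs = len ps \<and> (\<forall>t\<in>{0..len ps}. moore qs t = moore ps t)"
  using assms
proof (induction ps)
  case Nil then show ?case by simp
next
  case (Cons p rest)
  obtain l f where p: "p = (l, f)" by fastforce
  obtain q1 where q1: "good P q1" "len q1 = l" "\<forall>t\<in>{0..l}. moore q1 t = f t"
    using Cons.prems(3) p by auto
  show ?case
  proof (cases "rest = []")
    case True then show ?thesis using q1 p by auto
  next
    case False
    have cr: "composable rest" and fl: "f l = snd (hd rest) 0"
      using Cons.prems(2) p False by (auto simp: composable_cons)
    have pr: "\<forall>(l, f)\<in>set rest. l > 0 \<and> (\<exists>qs. good P qs \<and> len qs = l \<and> (\<forall>t\<in>{0..l}. moore qs t = f t))"
      using Cons.prems(3) by auto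
    obtain qr where qr: "good P qr" "len qr = len rest" "\<forall>t\<in>{0..len rest}. moore qr t = moore rest t"
      using Cons.IH[OF False cr pr] by blast
    have lr: "len rest > 0"
      by (rule len_pos_gen[OF False pr])
    have hr: "fst (hd rest) > 0" using pr False by (cases rest) auto
    have l0: "l > 0" using Cons.prems(3) p by auto
    have "snd (last q1) (fst (last q1)) = moore q1 (len q1)" using moore_end[OF q1(1)] by simp
    also have "\<dots> = f l" using q1 l0 by auto
    also have "\<dots> = moore rest 0" using fl moore_0[OF False] hr by simp
    also have "\<dots> = moore qr 0" using qr lr by auto
    also have "\<dots> = snd (hd qr) 0" using moore_start[OF qr(1)] .
    finally have g: "good P (q1 @ qr)" by (rule good_append[OF q1(1) qr(1)])
    have "\<forall>t\<in>{0..len (p # rest)}. moore (q1 @ qr) t = moore (p # rest) t"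
    proof
      fix t assume t: "t \<in> {0..len (p # rest)}"
      have qrne: "qr \<noteq> []" using qr(1) by (simp add: good_def)
      have e1: "moore (q1 @ qr) t = (if t \<le> l then moore q1 t else moore qr (t - l))"
        using moore_append[OF q1(1) qrne, of t] q1(2) by simp
      have e2: "moore (p # rest) t = (if t \<le> l then f t else moore rest (t - l))"
        using p False by (simp add: moore_cons)
      show "moore (q1 @ qr) t = moore (p # rest) t"
      proof (cases "t \<le> l")
        case True then show ?thesis using e1 e2 q1(3) t by auto
      next
        case False
        then have "t - l \<in> {0..len rest}" using t p by auto
        then show ?thesis using e1 e2 qr(3) False by auto
      qed
    qed
    then show ?thesis using g q1 qr p by (intro exI[of _ "q1 @ qr"]) auto
  qed
qed

definition cpiece :: "real \<Rightarrow> (real \<Rightarrow> 'b) \<Rightarrow> bool" where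
  "cpiece l f \<longleftrightarrow> (\<forall>t\<in>{0..l}. f t = f 0)"

lemma cpieceD:
  assumes "cpiece l f" "0 \<le> t" "t \<le> l" shows "f t = f 0"
proof -
  have "t \<in> {0..l}" using assms(2,3) by simp
  with assms(1) show ?thesis unfolding cpiece_def by blast
qed

lemma moore_const_list:
  "ps \<noteq> [] \<Longrightarrow> composable ps \<Longrightarrow> \<forall>(l, f)\<in>set ps. l > 0 \<and> cpiece l f \<Longrightarrow>
    t \<in> {0..len ps} \<Longrightarrow> moore ps t = snd (hd ps) 0"
proof (induction ps arbitrary: t)
  case Nil then show ?case by simp
next
  case (Cons p rest)
  obtain l f where p: "p = (l, f)" by fastforce
  have l0: "l > 0" and fc: "cpiece l f" using Cons.prems(3) p by auto
  have pr: "\<forall>(l, f)\<in>set rest. l > 0 \<and> cpiece l f" using Cons.prems(3) by simp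
  show ?case
  proof (cases "rest = []")
    case True
    then have "t \<in> {0..l}" using Cons.prems(4) p by auto
    then show ?thesis using p cpieceD[OF fc, of t] True by simp
  next
    case False
    have cr: "composable rest" and fl: "f l = snd (hd rest) 0"
      using Cons.prems(2) p False by (auto simp: composable_cons)
    show ?thesis
    proof (cases "t \<le> l")
      case True
      then have "t \<in> {0..l}" using Cons.prems(4) p by auto
      then show ?thesis using p cpieceD[OF fc, of t] True by (simp add: moore_cons)
    next
      case f: False
      have tr: "t - l \<in> {0..len rest}" using Cons.prems(4) p f by auto
      have "moore rest (t - l) = snd (hd rest) 0"
        by (rule Cons.IH[OF False cr pr tr])
      moreover have "f l = f 0" using cpieceD[OF fc, of l] l0 by simp
      ultimately show ?thesis using f p fl False by (simp add: moore_cons)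
    qed
  qed
qed

lemma moore_cont:
  "ps \<noteq> [] \<Longrightarrow> composable ps \<Longrightarrow>
    \<forall>(l, f)\<in>set ps. l > 0 \<and> continuous_map (top_of_set {0..l}) T f \<Longrightarrow>
    continuous_map (top_of_set {0..len ps}) T (moore ps)"
proof (induction ps)
  case Nil then show ?case by simp
next
  case (Cons p rest)
  obtain l f where p: "p = (l, f)" by fastforce
  have l0: "l > 0" and fc: "continuous_map (top_of_set {0..l}) T f" using Cons.prems(3) p by auto
  show ?case
  proof (cases "rest = []")
    case True then show ?thesis using fc p by simp
  next
    case False
    have cr: "composable rest" and fl: "f l = snd (hd rest) 0"
      using Cons.prems(2) p False by (auto simp: composable_cons)
    have pr: "\<forall>(l, f)\<in>set rest. l > 0 \<and> continuous_map (top_of_set {0..l}) T f"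
      using Cons.prems(3) by auto
    have lr: "len rest > 0"
      by (rule len_pos_gen[OF False pr])
    have hr: "fst (hd rest) > 0" using pr False by (cases rest) auto
    have cm: "continuous_map (top_of_set {0..len rest}) T (moore rest)"
      by (rule Cons.IH[OF False cr pr])
    have eq: "moore (p # rest) = (\<lambda>t. if t \<le> l then f t else moore rest (t - l))"
      using p False by (auto simp: moore_cons)
    let ?X = "top_of_set {0..l + len rest}"
    have "continuous_map ?X T (\<lambda>t. if t \<le> l then f t else moore rest (t - l))"
    proof (rule continuous_map_cases_le[where p = "\<lambda>t. t" and q = "\<lambda>t. l"])
      show "continuous_map ?X euclideanreal (\<lambda>t. t)" by simp
      show "continuous_map ?X euclideanreal (\<lambda>t. l)" by simp
      have "{0..l + len rest} \<inter> {x. x \<in> topspace ?X \<and> x \<le> l} = {0..l}" using lr by auto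
      then have s1: "subtopology ?X {x. x \<in> topspace ?X \<and> x \<le> l} = top_of_set {0..l}"
        by (simp only: subtopology_subtopology)
      show "continuous_map (subtopology ?X {x. x \<in> topspace ?X \<and> x \<le> l}) T f"
        using fc s1 by simp
      have "{0..l + len rest} \<inter> {x. x \<in> topspace ?X \<and> l \<le> x} = {l..l + len rest}" using l0 by auto
      then have s2: "subtopology ?X {x. x \<in> topspace ?X \<and> l \<le> x} = top_of_set {l..l + len rest}"
        by (simp only: subtopology_subtopology)
      have h: "continuous_map (top_of_set {l..l + len rest}) (top_of_set {0..len rest}) (\<lambda>t. t - l)"
        by (auto intro!: continuous_intros)
      have "continuous_map (top_of_set {l..l + len rest}) T (\<lambda>t. moore rest (t - l))"
        using continuous_map_compose[OF h cm] by (simp add: comp_def)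
      then show "continuous_map (subtopology ?X {x. x \<in> topspace ?X \<and> l \<le> x}) T (\<lambda>t. moore rest (t - l))"
        using s2 by simp
      show "f x = moore rest (x - l)" if "x \<in> topspace ?X" "x = l" for x
        using that fl moore_0[OF False] hr by simp
    qed
    then show ?thesis using eq p by simp
  qed
qed

lemma good_positive: "good P ps \<Longrightarrow> \<forall>(l, f)\<in>set ps. l > 0 \<and> P l f"
  by (simp add: good_def)

lemma moore_absorb:
  assumes rc: "rclosed P"
  shows "ps \<noteq> [] \<Longrightarrow> composable ps \<Longrightarrow> \<forall>(l, f)\<in>set ps. l > 0 \<and> (P l f \<or> cpiece l f) \<Longrightarrow>
    \<exists>(l, f)\<in>set ps. P l f \<Longrightarrow>
    \<exists>qs. good P qs \<and> len qs = len ps \<and> (\<forall>t\<in>{0..len ps}. moore qs t = moore ps t)"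
proof (induction ps)
  case Nil then show ?case by simp
next
  case (Cons p rest)
  obtain l f where p: "p = (l, f)" by fastforce
  have l0: "l > 0" and lP: "P l f \<or> cpiece l f" using Cons.prems(3) p by auto
  have pr: "\<forall>(l, f)\<in>set rest. l > 0 \<and> (P l f \<or> cpiece l f)" using Cons.prems(3) by simp
  show ?case
  proof (cases "rest = []")
    case True
    then have "P l f" using Cons.prems(4) p by auto
    then show ?thesis using True p l0 by (intro exI[of _ "[(l, f)]"]) (auto simp: good_def)
  next
    case False
    have cr: "composable rest" and fl: "f l = snd (hd rest) 0"
      using Cons.prems(2) p False by (auto simp: composable_cons)
    have lr: "len rest > 0" using len_pos_gen[OF False pr] .
    have hr: "fst (hd rest) > 0" using pr False by (cases rest) auto
    have rest0: "moore rest 0 = snd (hd rest) 0" using moore_0[OF False] hr by simp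
    have lenps: "len (p # rest) = l + len rest" using p by simp
    show ?thesis
    proof (cases "\<exists>(l, f)\<in>set rest. P l f")
      case True
      obtain qr where qr: "good P qr" "len qr = len rest" "\<forall>t\<in>{0..len rest}. moore qr t = moore rest t"
        using Cons.IH[OF False cr pr True] by blast
      have qr0: "snd (hd qr) 0 = f l"
        using qr(3)[rule_format, of 0] lr moore_start[OF qr(1)] rest0 fl by simp
      have qrne: "qr \<noteq> []" using qr(1) by (simp add: good_def)
      show ?thesis
      proof (cases "P l f")
        case True
        have g: "good P ((l, f) # qr)" using True l0 qr(1) qr0 by (auto simp: good_cons)
        have "moore ((l, f) # qr) t = moore (p # rest) t" if "t \<in> {0..len (p # rest)}" for t
        proof (cases "t \<le> l")
          case True then show ?thesis using p by (simp add: moore_cons)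
        next
          case False
          then have "t - l \<in> {0..len rest}" using that lenps by auto
          then show ?thesis using False p qr(3) qrne \<open>rest \<noteq> []\<close> by (simp add: moore_cons)
        qed
        then show ?thesis using g qr(2) p by (intro exI[of _ "(l, f) # qr"]) auto
      next
        case False
        then have fc: "cpiece l f" using lP by simp
        obtain l1 f1 qr' where qrs: "qr = (l1, f1) # qr'" using qrne by (cases qr) auto
        have l1: "l1 > 0" "P l1 f1" and qr'c: "qr' = [] \<or> good P qr' \<and> f1 l1 = snd (hd qr') 0"
          using qr(1) qrs by (auto simp: good_cons)
        define \<psi> where "\<psi> = (\<lambda>t::real. max 0 (t - l))"
        have Pn: "P (l + l1) (f1 \<circ> \<psi>)"
        proof (rule rclosedD[OF rc l1(2) l1(1)])
          show "l + l1 > 0" using l0 l1 by simp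
          show "continuous_on {0..l + l1} \<psi>" unfolding \<psi>_def by (intro continuous_intros)
          show "mono_on {0..l + l1} \<psi>" unfolding \<psi>_def by (rule mono_onI) auto
          show "\<psi> t \<in> {0..l1}" if "t \<in> {0..l + l1}" for t using that l1(1) unfolding \<psi>_def by auto
        qed
        have \<psi>e: "\<psi> (l + l1) = l1" unfolding \<psi>_def using l1 by simp
        have g: "good P ((l + l1, f1 \<circ> \<psi>) # qr')"
          using Pn l0 l1 qr'c \<psi>e by (auto simp: good_cons add_pos_pos)
        have f10: "f1 0 = f l" using qr0 qrs by simp
        have "moore ((l + l1, f1 \<circ> \<psi>) # qr') t = moore (p # rest) t" if t: "t \<in> {0..len (p # rest)}" for t
        proof (cases "t \<le> l")
          case True
          then have "\<psi> t = 0" unfolding \<psi>_def by simp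
          moreover have "f t = f 0" "f l = f 0" using cpieceD[OF fc, of t] cpieceD[OF fc, of l] t True l0 by auto
          ultimately show ?thesis using True p f10 l1 by (simp add: moore_cons)
        next
          case False
          then have tr: "t - l \<in> {0..len rest}" using t lenps by auto
          have ps_t: "moore (p # rest) t = moore qr (t - l)" using False p qr(3) tr \<open>rest \<noteq> []\<close>
            by (simp add: moore_cons)
          show ?thesis using ps_t qrs False unfolding \<psi>_def by (simp add: moore_cons algebra_simps)
        qed
        then show ?thesis using g qr(2) qrs p lenps
          by (intro exI[of _ "(l + l1, f1 \<circ> \<psi>) # qr'"]) auto
      qed
    next
      case False
      then have lP': "P l f" using Cons.prems(4) p by auto
      have rc': "\<forall>(l, f)\<in>set rest. l > 0 \<and> cpiece l f" using pr False by auto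
      define \<psi> where "\<psi> = (\<lambda>t::real. min t l)"
      have Pn: "P (l + len rest) (f \<circ> \<psi>)"
      proof (rule rclosedD[OF rc lP' l0])
        show "l + len rest > 0" using l0 lr by simp
        show "continuous_on {0..l + len rest} \<psi>" unfolding \<psi>_def by (intro continuous_intros)
        show "mono_on {0..l + len rest} \<psi>" unfolding \<psi>_def by (rule mono_onI) auto
        show "\<psi> t \<in> {0..l}" if "t \<in> {0..l + len rest}" for t using that l0 unfolding \<psi>_def by auto
      qed
      have "moore [(l + len rest, f \<circ> \<psi>)] t = moore (p # rest) t" if t: "t \<in> {0..len (p # rest)}" for t
      proof (cases "t \<le> l")
        case True then show ?thesis using p unfolding \<psi>_def by (simp add: moore_cons)
      next
        case F: False
        then have tr: "t - l \<in> {0..len rest}" using t lenps by auto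
        have "moore rest (t - l) = snd (hd rest) 0"
          by (rule moore_const_list[OF \<open>rest \<noteq> []\<close> cr rc' tr])
        then show ?thesis using F p fl \<open>rest \<noteq> []\<close> unfolding \<psi>_def by (simp add: moore_cons)
      qed
      then show ?thesis using Pn l0 lr lenps
        by (intro exI[of _ "[(l + len rest, f \<circ> \<psi>)]"]) (auto simp: good_def add_pos_pos)
    qed
  qed
qed

lemma const_moore:
  assumes rc: "rclosed P" and g: "good P ps" and s: "s \<in> {0..len ps}" and L: "L > 0"
  shows "\<exists>qs. good P qs \<and> len qs = L \<and> (\<forall>t\<in>{0..L}. moore qs t = moore ps s)"
  using moore_reparam[OF rc g L, of "\<lambda>_. s"] s by (auto intro: mono_onI)

lemma normcomp_moore:
  assumes rc: "rclosed P" and g1: "good P ps1" "len ps1 = 1" and g2: "good P ps2" "len ps2 = 1"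
    and e: "moore ps1 1 = moore ps2 0"
  shows "\<exists>qs. good P qs \<and> len qs = 1 \<and>
    normcomp (unit_path (moore ps1)) (unit_path (moore ps2)) = unit_path (moore qs)"
proof -
  have "\<exists>qs. good P qs \<and> len qs = 1/2 \<and> (\<forall>t\<in>{0..1/2}. moore qs t = moore ps1 ((\<lambda>t. 2 * t) t))"
    by (rule moore_reparam[OF rc g1(1)]) (use g1(2) in \<open>auto intro!: continuous_intros mono_onI\<close>)
  then obtain q1 where q1: "good P q1" "len q1 = 1/2" "\<forall>t\<in>{0..1/2}. moore q1 t = moore ps1 (2 * t)"
    by auto
  have "\<exists>qs. good P qs \<and> len qs = 1/2 \<and> (\<forall>t\<in>{0..1/2}. moore qs t = moore ps2 ((\<lambda>t. 2 * t) t))"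
    by (rule moore_reparam[OF rc g2(1)]) (use g2(2) in \<open>auto intro!: continuous_intros mono_onI\<close>)
  then obtain q2 where q2: "good P q2" "len q2 = 1/2" "\<forall>t\<in>{0..1/2}. moore q2 t = moore ps2 (2 * t)"
    by auto
  have "snd (last q1) (fst (last q1)) = moore q1 (len q1)" using moore_end[OF q1(1)] by simp
  also have "\<dots> = moore q1 (1/2)" by (simp only: q1(2))
  also have "\<dots> = moore ps1 (2 * (1/2))" using q1(3) by simp
  also have "\<dots> = moore ps1 1" by simp
  also have "\<dots> = moore q2 0" using e q2 by simp
  also have "\<dots> = snd (hd q2) 0" using moore_start[OF q2(1)] .
  finally have g: "good P (q1 @ q2)" by (rule good_append[OF q1(1) q2(1)])
  have q2ne: "q2 \<noteq> []" using q2(1) by (simp add: good_def)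
  have "normcomp (unit_path (moore ps1)) (unit_path (moore ps2)) t = unit_path (moore (q1 @ q2)) t" for t
  proof (cases "t \<in> {0..1}")
    case False then show ?thesis unfolding normcomp_def unit_path_def restrict_def by (simp only: if_False)
  next
    case True
    have ma: "moore (q1 @ q2) t = (if t \<le> 1/2 then moore q1 t else moore q2 (t - 1/2))"
      using moore_append[OF q1(1) q2ne, of t] unfolding q1(2) .
    show ?thesis
    proof (cases "t \<le> 1/2")
      case T: True
      then show ?thesis using True ma q1(3) by (simp add: normcomp_def unit_path_def)
    next
      case F: False
      then have "t - 1/2 \<in> {0..1/2}" using True by auto
      then have "moore q2 (t - 1/2) = moore ps2 (2 * t - 1)" using q2(3) by (auto simp: algebra_simps)
      then show ?thesis using True F ma by (simp add: normcomp_def unit_path_def)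
    qed
  qed
  then show ?thesis using g q1(2) q2(2) by (intro exI[of _ "q1 @ q2"]) auto
qed

definition PS :: "'b mpds \<Rightarrow> real \<Rightarrow> (real \<Rightarrow> 'b) \<Rightarrow> bool" where
  "PS X l f \<longleftrightarrow> (\<exists>\<gamma>\<in>mpaths X. \<exists>\<phi>\<in>I1. \<forall>t\<in>{0..l}. f t = \<gamma> (\<phi> (t / l)))"

lemma dpaths_Sp: "dpaths (Sp X) = {unit_path (\<lambda>_. x) | x. x \<in> topspace (mspace X)} \<union>
   {unit_path (moore ps) | ps. good (PS X) ps \<and> len ps = 1}"
  unfolding Sp_def good_def PS_def by auto

lemma dtop_Sp[simp]: "dtop (Sp X) = mspace X"
  by (simp add: Sp_def)

lemma rclosed_PS: "rclosed (PS X)"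
  unfolding rclosed_def
proof (intro allI impI)
  fix l l' :: real and f :: "real \<Rightarrow> 'a" and \<psi> :: "real \<Rightarrow> real"
  assume P: "PS X l f" and l: "0 < l" and l': "0 < l'" and c: "continuous_on {0..l'} \<psi>"
    and m: "mono_on {0..l'} \<psi>" and r: "\<psi> ` {0..l'} \<subseteq> {0..l}"
  obtain \<gamma> \<phi> where g: "\<gamma> \<in> mpaths X" and ph: "\<phi> \<in> I1" and f: "\<forall>t\<in>{0..l}. f t = \<gamma> (\<phi> (t / l))"
    using P unfolding PS_def by blast
  have phc: "continuous_on {0..1} \<phi>" and phm: "mono_on {0..1} \<phi>" and phr: "\<phi> ` {0..1} \<subseteq> {0..1}"
    using ph unfolding I1_def by auto
  define \<phi>' where "\<phi>' = (\<lambda>s. \<phi> (\<psi> (s * l') / l))"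
  have sl: "s * l' \<in> {0..l'}" if "s \<in> {0..1}" for s using that l' by (auto simp: mult_le_cancel_right1)
  have pr: "\<psi> (s * l') / l \<in> {0..1}" if "s \<in> {0..1}" for s
  proof -
    have "\<psi> (s * l') \<in> {0..l}" using r sl[OF that] by blast
    then show ?thesis using l by auto
  qed
  have "\<phi>' \<in> I1" unfolding I1_def
  proof (intro CollectI conjI)
    have "continuous_on {0..1} (\<lambda>s. \<psi> (s * l'))"
      by (rule continuous_on_compose2[OF c]) (use sl in \<open>auto intro!: continuous_intros\<close>)
    then have "continuous_on {0..1} (\<lambda>s. \<psi> (s * l') / l)" using l by (intro continuous_intros) auto
    then show "continuous_on {0..1} \<phi>'" unfolding \<phi>'_def
      by (rule continuous_on_compose2[OF phc]) (use pr in auto)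
    show "mono_on {0..1} \<phi>'" unfolding \<phi>'_def
    proof (rule mono_onI)
      fix r s :: real assume rs: "r \<in> {0..1}" "s \<in> {0..1}" "r \<le> s"
      have "\<psi> (r * l') \<le> \<psi> (s * l')"
        by (rule mono_onD[OF m sl[OF rs(1)] sl[OF rs(2)]]) (use rs l' in \<open>simp add: mult_right_mono\<close>)
      then have "\<psi> (r * l') / l \<le> \<psi> (s * l') / l" using l by (simp add: divide_right_mono)
      then show "\<phi> (\<psi> (r * l') / l) \<le> \<phi> (\<psi> (s * l') / l)"
        by (rule mono_onD[OF phm pr[OF rs(1)] pr[OF rs(2)]])
    qed
    show "\<phi>' ` {0..1} \<subseteq> {0..1}" unfolding \<phi>'_def using phr pr by auto
  qed
  moreover have "\<forall>t\<in>{0..l'}. (f \<circ> \<psi>) t = \<gamma> (\<phi>' (t / l'))"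
  proof
    fix t assume t: "t \<in> {0..l'}"
    then have "\<psi> t \<in> {0..l}" using r by blast
    then show "(f \<circ> \<psi>) t = \<gamma> (\<phi>' (t / l'))" using f l' unfolding \<phi>'_def by simp
  qed
  ultimately show "PS X l' (f \<circ> \<psi>)" unfolding PS_def using g by blast
qed

lemma PS_cont:
  assumes X: "is_mpds X" and P: "PS X l f" and l: "l > 0"
  shows "continuous_map (top_of_set {0..l}) (mspace X) f"
proof -
  obtain \<gamma> \<phi> where g: "\<gamma> \<in> mpaths X" and ph: "\<phi> \<in> I1" and f: "\<forall>t\<in>{0..l}. f t = \<gamma> (\<phi> (t / l))"
    using P unfolding PS_def by blast
  have gc: "continuous_map (top_of_set {0..1}) (mspace X) \<gamma>" using X g unfolding is_mpds_def by blast
  have phc: "continuous_on {0..1} \<phi>" and phr: "\<phi> ` {0..1} \<subseteq> {0..1}"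
    using ph unfolding I1_def by auto
  have h: "continuous_map (top_of_set {0..l}) (top_of_set {0..1}) (\<lambda>t. \<phi> (t / l))"
  proof -
    have "continuous_on {0..l} (\<lambda>t. \<phi> (t / l))"
      by (rule continuous_on_compose2[OF phc]) (use l in \<open>auto intro!: continuous_intros simp: divide_le_eq_1\<close>)
    moreover have "(\<lambda>t. \<phi> (t / l)) \<in> {0..l} \<rightarrow> {0..1}" using phr l by (auto simp: divide_le_eq_1)
    ultimately show ?thesis by simp
  qed
  have "continuous_map (top_of_set {0..l}) (mspace X) (\<lambda>t. \<gamma> (\<phi> (t / l)))"
    using continuous_map_compose[OF h gc] by (simp add: comp_def)
  then show ?thesis by (rule continuous_map_eq) (use f in auto)
qed

lemma unit_path_eqI: "(\<And>t. t \<in> {0..1} \<Longrightarrow> f t = g t) \<Longrightarrow> unit_path f = unit_path g"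
  unfolding unit_path_def by (rule restrict_ext)

lemma unit_path_apply: "t \<in> {0..1} \<Longrightarrow> unit_path f t = f t"
  by (simp add: unit_path_def)

lemma unit_path_ext: "unit_path f \<in> extensional {0..1}"
  by (simp add: unit_path_def)

lemma good_cont:
  assumes "good P ps" "\<And>l f. P l f \<Longrightarrow> l > 0 \<Longrightarrow> continuous_map (top_of_set {0..l}) T f" "len ps = 1"
  shows "continuous_map (top_of_set {0..1}) T (unit_path (moore ps))"
proof -
  have "continuous_map (top_of_set {0..len ps}) T (moore ps)"
    by (rule moore_cont) (use assms(1,2) in \<open>auto simp: good_def\<close>)
  then have "continuous_map (top_of_set {0..1}) T (moore ps)" using assms(3) by simp
  then show ?thesis by (rule continuous_map_eq) (auto simp: unit_path_apply)
qed

lemma const_to_moore: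
  assumes rc: "rclosed P" and g: "good P q" "len q = 1" and s: "s \<in> {0..1}"
  shows "\<exists>ps. good P ps \<and> len ps = 1 \<and> unit_path (\<lambda>_. moore q s) = unit_path (moore ps)"
proof -
  obtain ps where "good P ps" "len ps = 1" "\<forall>t\<in>{0..1}. moore ps t = moore q s"
    using const_moore[OF rc g(1), of s 1] s g(2) by auto
  then show ?thesis by (intro exI[of _ ps]) (auto intro: unit_path_eqI)
qed

lemma is_dspace_Sp:
  assumes X: "is_mpds X"
  shows "is_dspace (Sp X)"
  unfolding is_dspace_def
proof (intro conjI ballI impI allI)
  have rc: "rclosed (PS X)" by (rule rclosed_PS)
  fix \<gamma> assume "\<gamma> \<in> dpaths (Sp X)"
  then consider x where "x \<in> topspace (mspace X)" "\<gamma> = unit_path (\<lambda>_. x)"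
    | ps where "good (PS X) ps" "len ps = 1" "\<gamma> = unit_path (moore ps)"
    unfolding dpaths_Sp by blast
  then show "\<gamma> \<in> extensional {0..1}"
    by cases (auto simp: unit_path_ext)
next
  fix \<gamma> assume "\<gamma> \<in> dpaths (Sp X)"
  then consider x where "x \<in> topspace (mspace X)" "\<gamma> = unit_path (\<lambda>_. x)"
    | ps where "good (PS X) ps" "len ps = 1" "\<gamma> = unit_path (moore ps)"
    unfolding dpaths_Sp by blast
  then show "continuous_map (top_of_set {0..1}) (dtop (Sp X)) \<gamma>"
  proof cases
    case 1
    then show ?thesis by (auto simp: unit_path_apply intro: continuous_map_eq[OF continuous_map_const[THEN iffD2]])
  next
    case 2
    then show ?thesis using good_cont[OF 2(1) PS_cont[OF X] 2(2)] by simp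
  qed
next
  fix x assume "x \<in> topspace (dtop (Sp X))"
  then show "unit_path (\<lambda>_. x) \<in> dpaths (Sp X)" unfolding dpaths_Sp by auto
next
  have rc: "rclosed (PS X)" by (rule rclosed_PS)
  fix \<gamma>1 \<gamma>2 assume g1: "\<gamma>1 \<in> dpaths (Sp X)" and g2: "\<gamma>2 \<in> dpaths (Sp X)" and e: "\<gamma>1 1 = \<gamma>2 0"
  show "normcomp \<gamma>1 \<gamma>2 \<in> dpaths (Sp X)"
  proof (cases "\<exists>x. \<gamma>1 = unit_path (\<lambda>_. x) \<and> \<gamma>2 = unit_path (\<lambda>_. x) \<and> x \<in> topspace (mspace X)")
    case True
    then obtain x where x: "\<gamma>1 = unit_path (\<lambda>_. x)" "\<gamma>2 = unit_path (\<lambda>_. x)" "x \<in> topspace (mspace X)" by blast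
    have "normcomp \<gamma>1 \<gamma>2 = unit_path (\<lambda>_. x)" unfolding x normcomp_def
      by (rule unit_path_eqI) (auto simp: unit_path_apply)
    then show ?thesis unfolding dpaths_Sp using x by auto
  next
    case False
    have "\<exists>ps1 ps2. good (PS X) ps1 \<and> len ps1 = 1 \<and> good (PS X) ps2 \<and> len ps2 = 1 \<and>
        \<gamma>1 = unit_path (moore ps1) \<and> \<gamma>2 = unit_path (moore ps2)"
    proof -
      consider x where "x \<in> topspace (mspace X)" "\<gamma>1 = unit_path (\<lambda>_. x)"
        | ps where "good (PS X) ps" "len ps = 1" "\<gamma>1 = unit_path (moore ps)"
        using g1 unfolding dpaths_Sp by blast
      note c1 = this
      consider y where "y \<in> topspace (mspace X)" "\<gamma>2 = unit_path (\<lambda>_. y)"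
        | ps where "good (PS X) ps" "len ps = 1" "\<gamma>2 = unit_path (moore ps)"
        using g2 unfolding dpaths_Sp by blast
      note c2 = this
      show ?thesis
      proof (cases rule: c1)
        case (1 x)
        show ?thesis
        proof (cases rule: c2)
          case (1 y)
          have "x = y" using e \<open>\<gamma>1 = _\<close> \<open>\<gamma>2 = _\<close> by (simp add: unit_path_apply)
          then show ?thesis using False 1 \<open>\<gamma>1 = _\<close> \<open>x \<in> _\<close> by blast
        next
          case (2 ps2)
          have "x = moore ps2 0" using e \<open>\<gamma>1 = _\<close> 2 by (simp add: unit_path_apply)
          then obtain ps1 where "good (PS X) ps1" "len ps1 = 1" "\<gamma>1 = unit_path (moore ps1)"
            using const_to_moore[OF rc 2(1,2), of 0] \<open>\<gamma>1 = _\<close> by auto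
          then show ?thesis using 2 by blast
        qed
      next
        case (2 ps1)
        show ?thesis
        proof (cases rule: c2)
          case (1 y)
          have "y = moore ps1 1" using e \<open>\<gamma>2 = _\<close> 2 by (simp add: unit_path_apply)
          then obtain ps2 where "good (PS X) ps2" "len ps2 = 1" "\<gamma>2 = unit_path (moore ps2)"
            using const_to_moore[OF rc 2(1,2), of 1] \<open>\<gamma>2 = _\<close> by auto
          then show ?thesis using 2 by blast
        next
          case (2 ps2)
          then show ?thesis using \<open>good (PS X) ps1\<close> \<open>len ps1 = 1\<close> \<open>\<gamma>1 = _\<close> by blast
        qed
      qed
    qed
    then obtain ps1 ps2 where p: "good (PS X) ps1" "len ps1 = 1" "good (PS X) ps2" "len ps2 = 1"
        "\<gamma>1 = unit_path (moore ps1)" "\<gamma>2 = unit_path (moore ps2)" by blast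
    have "moore ps1 1 = moore ps2 0" using e p(5,6) by (simp add: unit_path_apply)
    then obtain qs where "good (PS X) qs" "len qs = 1" "normcomp \<gamma>1 \<gamma>2 = unit_path (moore qs)"
      using normcomp_moore[OF rc p(1-4)] p(5,6) by blast
    then show ?thesis unfolding dpaths_Sp by blast
  qed
next
  have rc: "rclosed (PS X)" by (rule rclosed_PS)
  fix \<gamma> \<phi> assume g: "\<gamma> \<in> dpaths (Sp X)" and ph: "\<phi> \<in> I1"
  have phc: "continuous_on {0..1} \<phi>" and phm: "mono_on {0..1} \<phi>" and phr: "\<And>t. t \<in> {0..1} \<Longrightarrow> \<phi> t \<in> {0..1}"
    using ph unfolding I1_def by blast+
  consider x where "x \<in> topspace (mspace X)" "\<gamma> = unit_path (\<lambda>_. x)"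
    | ps where "good (PS X) ps" "len ps = 1" "\<gamma> = unit_path (moore ps)"
    using g unfolding dpaths_Sp by blast
  then show "unit_path (\<gamma> \<circ> \<phi>) \<in> dpaths (Sp X)"
  proof cases
    case (1 x)
    have "unit_path (\<gamma> \<circ> \<phi>) = unit_path (\<lambda>_. x)"
      by (rule unit_path_eqI) (use 1 phr in \<open>auto simp: unit_path_apply\<close>)
    then show ?thesis unfolding dpaths_Sp using 1 by auto
  next
    case (2 ps)
    obtain qs where qs: "good (PS X) qs" "len qs = 1" "\<forall>t\<in>{0..1}. moore qs t = moore ps (\<phi> t)"
      using moore_reparam[OF rc 2(1), of 1 \<phi>] phc phm phr 2(2) by auto
    have "unit_path (\<gamma> \<circ> \<phi>) = unit_path (moore qs)"
      by (rule unit_path_eqI) (use 2 phr qs(3) in \<open>auto simp: unit_path_apply\<close>)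
    then show ?thesis unfolding dpaths_Sp using qs by auto
  qed
qed

lemma geo_istop: "istopology (\<lambda>U. U \<subseteq> geo_carrier K \<and>
     (\<forall>n c. c \<in> cells K n \<longrightarrow>
        openin (top_of_set (cube n)) {x \<in> cube n. cell_map K n c x \<in> U}))"
  unfolding istopology_def
proof (rule conjI; intro allI impI)
  fix S T assume S: "S \<subseteq> geo_carrier K \<and> (\<forall>n c. c \<in> cells K n \<longrightarrow>
        openin (top_of_set (cube n)) {x \<in> cube n. cell_map K n c x \<in> S})"
    and T: "T \<subseteq> geo_carrier K \<and> (\<forall>n c. c \<in> cells K n \<longrightarrow>
        openin (top_of_set (cube n)) {x \<in> cube n. cell_map K n c x \<in> T})"
  show "S \<inter> T \<subseteq> geo_carrier K \<and> (\<forall>n c. c \<in> cells K n \<longrightarrow>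
        openin (top_of_set (cube n)) {x \<in> cube n. cell_map K n c x \<in> S \<inter> T})"
  proof (intro conjI allI impI)
    show "S \<inter> T \<subseteq> geo_carrier K" using S by blast
    fix n c assume c: "c \<in> cells K n"
    have "{x \<in> cube n. cell_map K n c x \<in> S \<inter> T} =
        {x \<in> cube n. cell_map K n c x \<in> S} \<inter> {x \<in> cube n. cell_map K n c x \<in> T}" by blast
    then show "openin (top_of_set (cube n)) {x \<in> cube n. cell_map K n c x \<in> S \<inter> T}"
      using S T c by (simp add: openin_Int)
  qed
next
  fix \<K> assume A: "\<forall>K'\<in>\<K>. K' \<subseteq> geo_carrier K \<and> (\<forall>n c. c \<in> cells K n \<longrightarrow>
        openin (top_of_set (cube n)) {x \<in> cube n. cell_map K n c x \<in> K'})"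
  show "\<Union>\<K> \<subseteq> geo_carrier K \<and> (\<forall>n c. c \<in> cells K n \<longrightarrow>
        openin (top_of_set (cube n)) {x \<in> cube n. cell_map K n c x \<in> \<Union>\<K>})"
  proof (intro conjI allI impI)
    show "\<Union>\<K> \<subseteq> geo_carrier K" using A by blast
    fix n c assume c: "c \<in> cells K n"
    have "{x \<in> cube n. cell_map K n c x \<in> \<Union>\<K>} =
        \<Union>((\<lambda>K'. {x \<in> cube n. cell_map K n c x \<in> K'}) ` \<K>)" by blast
    then show "openin (top_of_set (cube n)) {x \<in> cube n. cell_map K n c x \<in> \<Union>\<K>}"
      using A c by (auto intro!: openin_Union)
  qed
qed

lemma openin_geo: "openin (geo_top K) U \<longleftrightarrow> U \<subseteq> geo_carrier K \<and>
     (\<forall>n c. c \<in> cells K n \<longrightarrow> openin (top_of_set (cube n)) {x \<in> cube n. cell_map K n c x \<in> U})"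
  unfolding geo_top_def using geo_istop[of K] by simp

lemma cell_map_carrier: "c \<in> cells K n \<Longrightarrow> x \<in> cube n \<Longrightarrow> cell_map K n c x \<in> geo_carrier K"
  unfolding cell_map_def geo_carrier_def geo_pts_def by auto

lemma topspace_geo: "topspace (geo_top K) = geo_carrier K"
proof
  show "topspace (geo_top K) \<subseteq> geo_carrier K"
    using openin_geo[of K "topspace (geo_top K)"] by simp
  have "openin (geo_top K) (geo_carrier K)" unfolding openin_geo
  proof (intro conjI allI impI)
    fix n c assume "c \<in> cells K n"
    then have "{x \<in> cube n. cell_map K n c x \<in> geo_carrier K} = cube n"
      using cell_map_carrier by fastforce
    then show "openin (top_of_set (cube n)) {x \<in> cube n. cell_map K n c x \<in> geo_carrier K}" by simp
  qed simp
  then show "geo_carrier K \<subseteq> topspace (geo_top K)" by (rule openin_subset)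
qed

lemma cell_map_cont: "c \<in> cells K n \<Longrightarrow> continuous_map (top_of_set (cube n)) (geo_top K) (cell_map K n c)"
  unfolding continuous_map_def topspace_geo
  using cell_map_carrier[of c K n] by (auto simp: openin_geo)

definition PK :: "'a precub \<Rightarrow> real \<Rightarrow> (real \<Rightarrow> 'a gpt) \<Rightarrow> bool" where
  "PK K l f \<longleftrightarrow> (\<exists>n c \<gamma>. c \<in> cells K n \<and> dir_cube_path n l \<gamma> \<and>
          (\<forall>t\<in>{0..l}. f t = cell_map K n c (\<gamma> t)))"

lemma geo_dipaths_alt: "geo_dipaths K = {unit_path (moore ps) | ps. good (PK K) ps \<and> len ps = 1}"
  unfolding geo_dipaths_def good_def PK_def by auto

lemma rclosed_PK: "rclosed (PK K)"
  unfolding rclosed_def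
proof (intro allI impI)
  fix l l' :: real and f :: "real \<Rightarrow> 'a gpt" and \<psi> :: "real \<Rightarrow> real"
  assume P: "PK K l f" and l: "0 < l" and l': "0 < l'" and c: "continuous_on {0..l'} \<psi>"
    and m: "mono_on {0..l'} \<psi>" and r: "\<psi> ` {0..l'} \<subseteq> {0..l}"
  obtain n d \<rho> where d: "d \<in> cells K n" and dp: "dir_cube_path n l \<rho>"
    and f: "\<forall>t\<in>{0..l}. f t = cell_map K n d (\<rho> t)"
    using P unfolding PK_def by blast
  have rc: "continuous_on {0..l} \<rho>" and rr: "\<rho> ` {0..l} \<subseteq> cube n"
    and rm: "\<And>i. mono_on {0..l} (\<lambda>t. \<rho> t i)"
    using dp unfolding dir_cube_path_def by auto
  have "dir_cube_path n l' (\<rho> \<circ> \<psi>)" unfolding dir_cube_path_def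
  proof (intro conjI allI)
    show "continuous_on {0..l'} (\<rho> \<circ> \<psi>)"
      using continuous_on_compose2[OF rc c r] by (simp add: comp_def)
    show "(\<rho> \<circ> \<psi>) ` {0..l'} \<subseteq> cube n" using r rr by auto
    fix i
    show "mono_on {0..l'} (\<lambda>t. (\<rho> \<circ> \<psi>) t i)"
    proof (rule mono_onI)
      fix a b assume ab: "a \<in> {0..l'}" "b \<in> {0..l'}" "a \<le> b"
      have "\<psi> a \<le> \<psi> b" by (rule mono_onD[OF m ab])
      moreover have "\<psi> a \<in> {0..l}" "\<psi> b \<in> {0..l}" using r ab by blast+
      ultimately show "(\<rho> \<circ> \<psi>) a i \<le> (\<rho> \<circ> \<psi>) b i" using mono_onD[OF rm[of i]] by simp
    qed
  qed
  moreover have "\<forall>t\<in>{0..l'}. (f \<circ> \<psi>) t = cell_map K n d ((\<rho> \<circ> \<psi>) t)"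
  proof
    fix t assume "t \<in> {0..l'}"
    then have "\<psi> t \<in> {0..l}" using r by blast
    then show "(f \<circ> \<psi>) t = cell_map K n d ((\<rho> \<circ> \<psi>) t)" using f by simp
  qed
  ultimately show "PK K l' (f \<circ> \<psi>)" unfolding PK_def using d by blast
qed

lemma PK_cont:
  assumes P: "PK K l f" and l: "l > 0"
  shows "continuous_map (top_of_set {0..l}) (geo_top K) f"
proof -
  obtain n d \<rho> where d: "d \<in> cells K n" and dp: "dir_cube_path n l \<rho>"
    and f: "\<forall>t\<in>{0..l}. f t = cell_map K n d (\<rho> t)"
    using P unfolding PK_def by blast
  have h: "continuous_map (top_of_set {0..l}) (top_of_set (cube n)) \<rho>"
    using dp unfolding dir_cube_path_def by auto
  have "continuous_map (top_of_set {0..l}) (geo_top K) (\<lambda>t. cell_map K n d (\<rho> t))"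
    using continuous_map_compose[OF h cell_map_cont[OF d]] by (simp add: comp_def)
  then show ?thesis by (rule continuous_map_eq) (use f in auto)
qed

definition intr :: "(nat \<Rightarrow> real) \<Rightarrow> bool" where
  "intr x \<longleftrightarrow> (\<exists>i. 0 < x i \<and> x i < 1)"

lemma intr_delta: "intr (delta i a y) \<longleftrightarrow> intr y"
proof
  assume "intr (delta i a y)"
  then obtain k where k: "0 < delta i a y k" "delta i a y k < 1" unfolding intr_def by blast
  show "intr y"
  proof (cases "Suc k < i")
    case True then show ?thesis using k unfolding intr_def delta_def by auto
  next
    case False
    then show ?thesis using k unfolding intr_def delta_def by (auto split: if_splits)
  qed
next
  assume "intr y"
  then obtain j where j: "0 < y j" "y j < 1" unfolding intr_def by blast
  show "intr (delta i a y)"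
  proof (cases "Suc j < i")
    case True
    then have "delta i a y j = y j" unfolding delta_def by simp
    then show ?thesis using j unfolding intr_def by metis
  next
    case False
    then have "delta i a y (Suc j) = y j" unfolding delta_def by simp
    then show ?thesis using j unfolding intr_def by metis
  qed
qed

lemma intr_apply_word: "intr (apply_word w x) \<longleftrightarrow> intr x"
  by (induction w) (auto simp: intr_delta)

lemma equivclp_inv:
  assumes "\<And>p q. r p q \<Longrightarrow> g p = g q" and "equivclp r p q"
  shows "g p = g q"
proof -
  have "(symclp r)\<^sup>*\<^sup>* p q" using assms(2) by (simp add: equivclp_def)
  then show ?thesis
  proof (induction rule: rtranclp_induct)
    case base then show ?case by simp
  next
    case (step y z)
    then show ?case using assms(1) by (auto simp: symclp_def)
  qed
qed

lemma geo_rel_intr: "geo_rel K p q \<Longrightarrow> intr (snd (snd p)) = intr (snd (snd q))"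
  unfolding geo_rel_def by (auto simp: intr_apply_word)

lemma geo_cls_self: "p \<in> geo_pts K \<Longrightarrow> p \<in> geo_cls K p"
  unfolding geo_cls_def by auto

lemma cell_map_eq_intr:
  assumes "c \<in> cells K n" "x \<in> cube n" "cell_map K n c x = cell_map K m d y"
  shows "intr x = intr y"
proof -
  have "(n, c, x) \<in> geo_cls K (m, d, y)"
    using geo_cls_self[of "(n, c, x)" K] assms unfolding cell_map_def geo_pts_def by auto
  then have "equivclp (geo_rel K) (m, d, y) (n, c, x)" unfolding geo_cls_def by auto
  from equivclp_inv[of "geo_rel K" "\<lambda>p. intr (snd (snd p))", OF geo_rel_intr this]
  show ?thesis by simp
qed

lemma geo_cls_eq: "equivclp (geo_rel K) p q \<Longrightarrow> geo_cls K p = geo_cls K q"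
  unfolding geo_cls_def by (auto intro: equivclp_trans equivclp_sym)

fun vw :: "(nat \<Rightarrow> real) \<Rightarrow> nat \<Rightarrow> (nat \<times> bool) list" where
  "vw v 0 = []"
| "vw v (Suc k) = (Suc k, v k = 1) # vw v k"

lemma vw_length[simp]: "length (vw v k) = k"
  by (induction k) auto

lemma vw_valid: "valid_word 0 (vw v k)"
  by (induction k) auto

lemma vw_apply: "apply_word (vw v k) (\<lambda>_. 0) = (\<lambda>i. if i < k then (if v i = 1 then 1 else 0) else 0)"
proof (induction k)
  case 0 then show ?case by simp
next
  case (Suc k)
  show ?case
  proof
    fix i
    show "apply_word (vw v (Suc k)) (\<lambda>_. 0) i = (if i < Suc k then (if v i = 1 then 1 else 0) else 0)"
      using Suc by (cases "i < k"; cases "i = k") (auto simp: delta_def)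
  qed
qed

lemma face_word_cells:
  assumes K: "precubical K"
  shows "valid_word m w \<Longrightarrow> c \<in> cells K (m + length w) \<Longrightarrow> face_word K m w c \<in> cells K m"
proof (induction w arbitrary: c)
  case Nil then show ?case by simp
next
  case (Cons p w)
  obtain i a where p: "p = (i, a)" by fastforce
  have f1: "\<forall>n c i a. c \<in> cells K n \<and> 1 \<le> i \<and> i \<le> n \<longrightarrow> face K n i a c \<in> cells K (n - 1)"
    using K unfolding precubical_def by blast
  have "face K (m + length w + 1) i a c \<in> cells K (m + length w + 1 - 1)"
    by (rule f1[rule_format]) (use Cons.prems p in auto)
  then show ?case using Cons p by simp
qed

lemma vertex_class:
  assumes K: "precubical K" and c: "c \<in> cells K n" and v: "v \<in> verts n"
  shows "\<exists>u\<in>cells K 0. cell_map K n c v = cell_map K 0 u (\<lambda>_. 0)"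
proof -
  let ?w = "vw v n"
  have av: "apply_word ?w (\<lambda>_. 0) = v"
  proof
    fix i
    show "apply_word ?w (\<lambda>_. 0) i = v i"
      using v unfolding vw_apply verts_def cube_def by auto
  qed
  have c': "c \<in> cells K (0 + length ?w)" using c by simp
  have z: "(\<lambda>_. 0::real) \<in> cube 0" by (simp add: cube_def)
  have "geo_rel K (0, face_word K 0 ?w c, \<lambda>_. 0) (n, c, v)"
    unfolding geo_rel_def using vw_valid[of v n] c' z av by fastforce
  then have "geo_cls K (0, face_word K 0 ?w c, \<lambda>_. 0) = geo_cls K (n, c, v)"
    by (intro geo_cls_eq r_into_equivclp)
  moreover have "face_word K 0 ?w c \<in> cells K 0"
    by (rule face_word_cells[OF K vw_valid c'])
  ultimately show ?thesis unfolding cell_map_def by metis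
qed

lemma verts_intr:
  assumes "v \<in> verts n" shows "\<not> intr v"
proof
  assume "intr v"
  then obtain i where i: "0 < v i" "v i < 1" unfolding intr_def by blast
  show False
  proof (cases "i < n")
    case True
    then have "v i = 0 \<or> v i = 1" using assms unfolding verts_def by blast
    then show False using i by auto
  next
    case False
    then have "v i = 0" using assms unfolding verts_def cube_def by simp
    then show False using i by simp
  qed
qed

lemma base_nonconst:
  assumes c: "c \<in> cells K n" and g: "\<gamma> \<in> mpaths (cube_mpds n)"
  shows "\<exists>t\<in>{0..1}. cell_map K n c (\<gamma> t) \<noteq> cell_map K n c (\<gamma> 0)"
proof -
  obtain a b where ab: "a \<in> verts n" "b \<in> verts n" "\<forall>i. a i \<le> b i" "a \<noteq> b" "\<gamma> 0 = a" "\<gamma> 1 = b"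
    and dp: "dir_cube_path n 1 \<gamma>"
  proof -
    have "\<gamma> \<in> extensional {0..1} \<and> dir_cube_path n 1 \<gamma> \<and>
        (\<exists>a\<in>verts n. \<exists>b\<in>verts n. (\<forall>i. a i \<le> b i) \<and> a \<noteq> b \<and> \<gamma> 0 = a \<and> \<gamma> 1 = b)"
      using g unfolding cube_mpds_def by simp
    then show ?thesis using that by blast
  qed
  obtain i where ne: "a i \<noteq> b i" using ab(4) by auto
  have "i < n"
  proof (rule ccontr)
    assume "\<not> i < n"
    then have "a i = 0" "b i = 0" using ab(1,2) unfolding verts_def cube_def by auto
    then show False using \<open>a i \<noteq> b i\<close> by simp
  qed
  then have d: "a i = 0 \<or> a i = 1" "b i = 0 \<or> b i = 1" using ab(1,2) unfolding verts_def by blast+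
  have le: "a i \<le> b i" using ab(3) by blast
  have ai1: "a i = 0"
  proof (rule ccontr)
    assume "a i \<noteq> 0"
    then have a1: "a i = 1" using d(1) by blast
    then have "b i = 1" using d(2) le by auto
    then show False using ne a1 by simp
  qed
  have ai2: "b i = 1"
  proof (rule ccontr)
    assume "b i \<noteq> 1"
    then have "b i = 0" using d(2) by blast
    then show False using ai1 ne by simp
  qed
  note ai = ai1 ai2
  have "continuous_on {0..1} (\<lambda>t. \<gamma> t i)"
  proof -
    have "continuous_on {0..1} \<gamma>" using dp unfolding dir_cube_path_def by blast
    then show ?thesis by (rule continuous_on_product_then_coordinatewise)
  qed
  then obtain t where t: "0 \<le> t" "t \<le> 1" "\<gamma> t i = 1/2"
  proof -
    have "\<gamma> 0 i \<le> 1/2" "1/2 \<le> \<gamma> 1 i" using ai ab(5,6) by simp_all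
    from IVT'[of "\<lambda>t. \<gamma> t i", OF this _ \<open>continuous_on {0..1} (\<lambda>t. \<gamma> t i)\<close>]
    show ?thesis using that by auto
  qed
  have "0 < \<gamma> t i \<and> \<gamma> t i < 1" using t(3) by simp
  then have i1: "intr (\<gamma> t)" unfolding intr_def by blast
  have i2: "\<not> intr (\<gamma> 0)" using verts_intr[OF ab(1)] ab(5) by simp
  have "\<gamma> ` {0..1} \<subseteq> cube n" using dp unfolding dir_cube_path_def by blast
  then have i3: "\<gamma> t \<in> cube n" using t(1,2) by auto
  have "cell_map K n c (\<gamma> t) \<noteq> cell_map K n c (\<gamma> 0)"
  proof
    assume "cell_map K n c (\<gamma> t) = cell_map K n c (\<gamma> 0)"
    from cell_map_eq_intr[OF c i3 this] show False using i1 i2 by simp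
  qed
  then show ?thesis using t(1,2) by (intro bexI[of _ t]) auto
qed

lemma tame_piece:
  assumes c: "c \<in> cells K n" and n: "n \<ge> 1" and dp: "dir_cube_path n l \<rho>" and l: "l > 0"
  shows "PS (tame_real K) l (\<lambda>t. cell_map K n c (\<rho> t))"
proof -
  have rc: "continuous_on {0..l} \<rho>" and rr: "\<rho> ` {0..l} \<subseteq> cube n"
    and rm: "\<And>i. mono_on {0..l} (\<lambda>t. \<rho> t i)"
    using dp unfolding dir_cube_path_def by auto
  define \<alpha> where "\<alpha> = (\<lambda>s::real. min l (max 0 ((3 * s - 1) * l)))"
  define e where "e = (\<lambda>i::nat. if i < n then 1 else (0::real))"
  define \<sigma>0 where "\<sigma>0 = (\<lambda>s::real. \<lambda>i. min 1 (3 * s) * \<rho> (\<alpha> s) i + max 0 (3 * s - 2) * (e i - \<rho> (\<alpha> s) i))"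
  define \<sigma> where "\<sigma> = restrict \<sigma>0 {0..1}"
  have \<alpha>r: "\<alpha> s \<in> {0..l}" for s unfolding \<alpha>_def using l by auto
  have \<alpha>m: "\<alpha> s \<le> \<alpha> s'" if "s \<le> s'" for s s'
  proof -
    have "(3 * s - 1) * l \<le> (3 * s' - 1) * l" using that l by (intro mult_right_mono) auto
    then show ?thesis unfolding \<alpha>_def by (intro min.mono max.mono) auto
  qed
  have \<alpha>c: "continuous_on {0..1} \<alpha>" unfolding \<alpha>_def by (intro continuous_intros)
  have \<rho>01: "0 \<le> \<rho> t i \<and> \<rho> t i \<le> 1" if "t \<in> {0..l}" for t i
  proof -
    have "\<rho> t \<in> cube n" using rr that by blast
    then show ?thesis unfolding cube_def by (cases "i < n") auto
  qed
  have \<rho>n: "\<rho> t i = 0" if "t \<in> {0..l}" "\<not> i < n" for t i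
  proof -
    have "\<rho> t \<in> cube n" using rr that by blast
    then show ?thesis unfolding cube_def using that by auto
  qed
  have e\<rho>: "0 \<le> e i - \<rho> t i" if "t \<in> {0..l}" for t i
    using \<rho>01[OF that, of i] \<rho>n[OF that, of i] unfolding e_def by auto
  have rcc: "continuous_on {0..1} (\<lambda>s. \<rho> (\<alpha> s) i)" for i
  proof -
    have "continuous_on {0..l} (\<lambda>t. \<rho> t i)" using rc by (rule continuous_on_product_then_coordinatewise)
    then show ?thesis by (rule continuous_on_compose2[OF _ \<alpha>c]) (use \<alpha>r in auto)
  qed
  have \<sigma>0c: "continuous_on {0..1} \<sigma>0"
  proof (rule continuous_on_coordinatewise_then_product)
    fix i
    show "continuous_on {0..1} (\<lambda>s. \<sigma>0 s i)" unfolding \<sigma>0_def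
      by (intro continuous_intros rcc)
  qed
  have \<sigma>0cube: "\<sigma>0 s \<in> cube n" if s: "s \<in> {0..1}" for s
    unfolding cube_def
  proof (intro CollectI conjI allI impI)
    fix i assume i: "i < n"
    let ?r = "\<rho> (\<alpha> s) i" and ?m = "min 1 (3 * s)" and ?q = "max 0 (3 * s - 2)"
    have r: "0 \<le> ?r" "?r \<le> 1" using \<rho>01[OF \<alpha>r] by auto
    have m: "0 \<le> ?m" "?m \<le> 1" using s by auto
    have q: "0 \<le> ?q" "?q \<le> 1" using s by auto
    have "?m * ?r \<le> ?r" using m r by (simp add: mult_left_le_one_le)
    moreover have "?q * (1 - ?r) \<le> 1 - ?r" using q r by (simp add: mult_left_le_one_le)
    moreover have "0 \<le> ?m * ?r" "0 \<le> ?q * (1 - ?r)" using m q r by auto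
    moreover have "\<sigma>0 s i = ?m * ?r + ?q * (1 - ?r)" unfolding \<sigma>0_def e_def using i by simp
    ultimately show "0 \<le> \<sigma>0 s i" "\<sigma>0 s i \<le> 1" by linarith+
  next
    fix i assume i: "n \<le> i"
    then show "\<sigma>0 s i = 0" unfolding \<sigma>0_def e_def using \<rho>n[OF \<alpha>r, of i] by simp
  qed
  have \<sigma>0m: "\<sigma>0 s i \<le> \<sigma>0 s' i" if ss: "s \<in> {0..1}" "s' \<in> {0..1}" "s \<le> s'" for s s' i
  proof -
    have rmono: "\<rho> (\<alpha> a) i \<le> \<rho> (\<alpha> b) i" if "a \<le> b" for a b
      using mono_onD[OF rm[of i] \<alpha>r \<alpha>r \<alpha>m[OF that]] .
    have low: "\<sigma>0 a i \<le> \<sigma>0 b i" if "0 \<le> a" "a \<le> b" "b \<le> 2/3" for a b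
    proof -
      have "max 0 (3 * a - 2) = 0" "max 0 (3 * b - 2) = 0" using that by auto
      moreover have "min 1 (3 * a) * \<rho> (\<alpha> a) i \<le> min 1 (3 * b) * \<rho> (\<alpha> b) i"
        by (rule mult_mono) (use that rmono \<rho>01[OF \<alpha>r] in auto)
      ultimately show ?thesis unfolding \<sigma>0_def by simp
    qed
    have high: "\<sigma>0 a i \<le> \<sigma>0 b i" if "2/3 \<le> a" "a \<le> b" for a b
    proof -
      have "\<alpha> a = l" "\<alpha> b = l" unfolding \<alpha>_def using that l by (auto simp: min_def max_def field_simps)
      moreover have "min 1 (3 * a) = 1" "min 1 (3 * b) = 1" using that by auto
      moreover have "max 0 (3 * a - 2) * (e i - \<rho> l i) \<le> max 0 (3 * b - 2) * (e i - \<rho> l i)"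
        by (rule mult_right_mono) (use that e\<rho>[of l] l in auto)
      ultimately show ?thesis unfolding \<sigma>0_def by simp
    qed
    show ?thesis
    proof (cases "s' \<le> 2/3")
      case True then show ?thesis using low ss by auto
    next
      case False
      show ?thesis
      proof (cases "2/3 \<le> s")
        case True then show ?thesis using high ss by auto
      next
        case False
        have "\<sigma>0 s i \<le> \<sigma>0 (2/3) i" using low ss False by auto
        also have "\<dots> \<le> \<sigma>0 s' i" using high \<open>\<not> s' \<le> 2/3\<close> by auto
        finally show ?thesis .
      qed
    qed
  qed
  have \<sigma>00: "\<sigma>0 0 = (\<lambda>_. 0)" unfolding \<sigma>0_def by auto
  have \<alpha>1: "\<alpha> 1 = l" unfolding \<alpha>_def using l by auto
  have \<sigma>01: "\<sigma>0 1 = e" unfolding \<sigma>0_def using \<alpha>1 by auto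
  have z: "(\<lambda>_. 0::real) \<in> verts n" unfolding verts_def cube_def by auto
  have ev: "e \<in> verts n" unfolding verts_def cube_def e_def by auto
  have ne: "(\<lambda>_. 0::real) \<noteq> e"
  proof
    assume "(\<lambda>_. 0::real) = e"
    then have "(0::real) = e 0" by metis
    then show False using n unfolding e_def by simp
  qed
  have \<sigma>m: "\<sigma> \<in> mpaths (cube_mpds n)"
  proof -
    have mp: "mpaths (cube_mpds n) = {\<gamma>. \<gamma> \<in> extensional {0..1} \<and> dir_cube_path n 1 \<gamma> \<and>
        (\<exists>a\<in>verts n. \<exists>b\<in>verts n. (\<forall>i. a i \<le> b i) \<and> a \<noteq> b \<and> \<gamma> 0 = a \<and> \<gamma> 1 = b)}"
      by (simp add: cube_mpds_def)
    show ?thesis unfolding mp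
  proof (intro CollectI conjI)
    show "\<sigma> \<in> extensional {0..1}" unfolding \<sigma>_def by simp
    show "dir_cube_path n 1 \<sigma>" unfolding dir_cube_path_def
    proof (intro conjI allI)
      show "continuous_on {0..1} \<sigma>" unfolding \<sigma>_def by (rule continuous_on_eq[OF \<sigma>0c]) simp
      show "\<sigma> ` {0..1} \<subseteq> cube n" unfolding \<sigma>_def using \<sigma>0cube by auto
      fix i show "mono_on {0..1} (\<lambda>t. \<sigma> t i)" unfolding \<sigma>_def
        by (rule mono_onI) (use \<sigma>0m in auto)
    qed
    show "\<exists>a\<in>verts n. \<exists>b\<in>verts n. (\<forall>i. a i \<le> b i) \<and> a \<noteq> b \<and> \<sigma> 0 = a \<and> \<sigma> 1 = b"
    proof -
      have "\<forall>i. (0::real) \<le> e i" unfolding e_def by simp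
      moreover have "\<sigma> 0 = (\<lambda>_. 0)" unfolding \<sigma>_def using \<sigma>00 by simp
      moreover have "\<sigma> 1 = e" unfolding \<sigma>_def using \<sigma>01 by simp
      ultimately show ?thesis using ne by (intro bexI[OF _ z] bexI[OF _ ev]) simp
    qed
  qed
  qed
  define \<tau> where "\<tau> = unit_path (cell_map K n c \<circ> \<sigma>)"
  have \<tau>t: "\<tau> \<in> mpaths (tame_real K)"
    unfolding \<tau>_def tame_real_def using tame_paths.base[OF c \<sigma>m] by simp
  define \<phi> where "\<phi> = (\<lambda>u::real. 1/3 + u/3)"
  have \<phi>I: "\<phi> \<in> I1" unfolding I1_def \<phi>_def
    by (auto intro!: continuous_intros mono_onI)
  have "\<forall>t\<in>{0..l}. cell_map K n c (\<rho> t) = \<tau> (\<phi> (t / l))"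
  proof
    fix t assume t: "t \<in> {0..l}"
    let ?s = "\<phi> (t / l)"
    have tl: "0 \<le> t / l" "t / l \<le> 1" using t l by auto
    have s01: "?s \<in> {0..1}" using tl unfolding \<phi>_def by auto
    have s3: "3 * ?s = 1 + t / l" unfolding \<phi>_def by simp
    have "(3 * ?s - 1) * l = t" using s3 l by simp
    then have "\<alpha> ?s = t" unfolding \<alpha>_def using t by auto
    moreover have "min 1 (3 * ?s) = 1" "max 0 (3 * ?s - 2) = 0" using s3 tl by auto
    ultimately have "\<sigma>0 ?s = \<rho> t" unfolding \<sigma>0_def by auto
    then show "cell_map K n c (\<rho> t) = \<tau> ?s"
      unfolding \<tau>_def using s01 by (simp add: unit_path_apply \<sigma>_def)
  qed
  then show ?thesis unfolding PS_def using \<tau>t \<phi>I by blast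
qed

lemma M11_ends:
  assumes "\<phi> \<in> M11" shows "\<phi> 0 = 0" "\<phi> 1 = 1"
proof -
  have m: "mono_on {0..1} \<phi>" and r: "\<phi> ` {0..1} = {0..1}" using assms unfolding M11_def by auto
  obtain s where s: "s \<in> {0..1}" "\<phi> s = 0" using r by (metis atLeastAtMost_iff image_iff order_refl zero_le_one)
  have "\<phi> 0 \<le> \<phi> s" using mono_onD[OF m, of 0 s] s by auto
  moreover have "\<phi> 0 \<in> {0..1}" using r by auto
  ultimately show "\<phi> 0 = 0" using s by auto
  obtain u where u: "u \<in> {0..1}" "\<phi> u = 1" using r by (metis atLeastAtMost_iff image_iff order_refl zero_le_one)
  have "\<phi> u \<le> \<phi> 1" using mono_onD[OF m, of u 1] u by auto
  moreover have "\<phi> 1 \<in> {0..1}" using r by auto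
  ultimately show "\<phi> 1 = 1" using u by auto
qed

lemma M11_I1: "\<phi> \<in> M11 \<Longrightarrow> \<phi> \<in> I1"
  unfolding M11_def I1_def by auto

lemma cont_reparam:
  assumes "continuous_map (top_of_set {0..1}) T \<gamma>" "\<phi> \<in> I1"
  shows "continuous_map (top_of_set {0..1}) T (unit_path (\<gamma> \<circ> \<phi>))"
proof -
  have "continuous_map (top_of_set {0..1}) (top_of_set {0..1}) \<phi>"
    using assms(2) unfolding I1_def by auto
  then have "continuous_map (top_of_set {0..1}) T (\<gamma> \<circ> \<phi>)"
    using continuous_map_compose assms(1) by blast
  then show ?thesis by (rule continuous_map_eq) (simp add: unit_path_apply)
qed

lemma normcomp_as_moore:
  "normcomp g1 g2 = unit_path (moore [(1/2, \<lambda>t. g1 (2 * t)), (1/2, \<lambda>t. g2 (2 * t))])"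
  unfolding normcomp_def
  by (rule unit_path_eqI) (simp add: algebra_simps)

lemma cont_normcomp:
  assumes c1: "continuous_map (top_of_set {0..1}) T g1" and c2: "continuous_map (top_of_set {0..1}) T g2"
    and e: "g1 1 = g2 0"
  shows "continuous_map (top_of_set {0..1}) T (normcomp g1 g2)"
proof -
  have h: "continuous_map (top_of_set {0..1/2}) (top_of_set {0..1}) (\<lambda>t::real. 2 * t)"
    by (auto intro!: continuous_intros)
  have p1: "continuous_map (top_of_set {0..1/2}) T (\<lambda>t. g1 (2 * t))"
    using continuous_map_compose[OF h c1] by (simp add: comp_def)
  have p2: "continuous_map (top_of_set {0..1/2}) T (\<lambda>t. g2 (2 * t))"
    using continuous_map_compose[OF h c2] by (simp add: comp_def)
  have "continuous_map (top_of_set {0..len [(1/2, \<lambda>t. g1 (2 * t)), (1/2, \<lambda>t. g2 (2 * t))]}) T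
      (moore [(1/2, \<lambda>t. g1 (2 * t)), (1/2, \<lambda>t. g2 (2 * t))])"
    by (rule moore_cont) (use p1 p2 e in \<open>auto simp: composable_cons\<close>)
  then have "continuous_map (top_of_set {0..1}) T (moore [(1/2, \<lambda>t. g1 (2 * t)), (1/2, \<lambda>t. g2 (2 * t))])"
    by simp
  then show ?thesis unfolding normcomp_as_moore by (rule continuous_map_eq) (simp add: unit_path_apply)
qed

lemma normcomp_ext: "normcomp g1 g2 \<in> extensional {0..1}"
  unfolding normcomp_def by (rule unit_path_ext)

lemma normcomp_0: "normcomp g1 g2 0 = g1 0" and normcomp_1: "normcomp g1 g2 1 = g2 1"
  unfolding normcomp_def by (simp_all add: unit_path_apply)

lemma tame_props:
  assumes "\<gamma> \<in> tame_paths K"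
  shows "\<gamma> \<in> extensional {0..1} \<and> continuous_map (top_of_set {0..1}) (geo_top K) \<gamma> \<and>
         \<gamma> 0 \<in> mstates (tame_real K) \<and> \<gamma> 1 \<in> mstates (tame_real K)"
  using assms
proof (induction rule: tame_paths.induct)
  case (base c n \<gamma>)
  have dp: "dir_cube_path n 1 \<gamma>" and ends: "\<gamma> 0 \<in> verts n" "\<gamma> 1 \<in> verts n"
    using base(2) unfolding cube_mpds_def by auto
  have h: "continuous_map (top_of_set {0..1}) (top_of_set (cube n)) \<gamma>"
    using dp unfolding dir_cube_path_def by auto
  have "continuous_map (top_of_set {0..1}) (geo_top K) (cell_map K n c \<circ> \<gamma>)"
    using continuous_map_compose[OF h cell_map_cont[OF base(1)]] .
  then have "continuous_map (top_of_set {0..1}) (geo_top K) (unit_path (cell_map K n c \<circ> \<gamma>))"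
    by (rule continuous_map_eq) (simp add: unit_path_apply)
  moreover have "unit_path (cell_map K n c \<circ> \<gamma>) 0 \<in> mstates (tame_real K)"
    "unit_path (cell_map K n c \<circ> \<gamma>) 1 \<in> mstates (tame_real K)"
    using ends base(1) unfolding tame_real_def by (auto simp: unit_path_apply)
  ultimately show ?case by (simp add: unit_path_ext)
next
  case (reparam \<gamma> \<phi>)
  then show ?case using cont_reparam[of "geo_top K" \<gamma> \<phi>] M11_I1[OF reparam(2)] M11_ends[OF reparam(2)]
    by (simp add: unit_path_ext unit_path_apply)
next
  case (comp \<gamma>1 \<gamma>2)
  then show ?case using cont_normcomp[of "geo_top K" \<gamma>1 \<gamma>2]
    by (simp add: normcomp_ext normcomp_0 normcomp_1)
qed

lemma is_mpds_tame: "is_mpds (tame_real K)"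
proof -
  have h1: "mstates (tame_real K) \<subseteq> topspace (mspace (tame_real K))"
    unfolding tame_real_def using cell_map_carrier[of _ K] by (auto simp: topspace_geo verts_def)
  have h2: "\<gamma> \<in> extensional {0..1} \<and> continuous_map (top_of_set {0..1}) (mspace (tame_real K)) \<gamma> \<and>
        \<gamma> 0 \<in> mstates (tame_real K) \<and> \<gamma> 1 \<in> mstates (tame_real K)"
    if "\<gamma> \<in> mpaths (tame_real K)" for \<gamma>
  proof -
    have "\<gamma> \<in> tame_paths K" using that by (simp add: tame_real_def)
    from tame_props[OF this] show ?thesis by (simp add: tame_real_def)
  qed
  have h3: "unit_path (\<gamma> \<circ> \<phi>) \<in> mpaths (tame_real K)" if "\<gamma> \<in> mpaths (tame_real K)" "\<phi> \<in> M11" for \<gamma> \<phi>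
    using that by (simp add: tame_real_def tame_paths.reparam)
  have h4: "normcomp \<gamma>1 \<gamma>2 \<in> mpaths (tame_real K)"
    if "\<gamma>1 \<in> mpaths (tame_real K)" "\<gamma>2 \<in> mpaths (tame_real K)" "\<gamma>1 1 = \<gamma>2 0" for \<gamma>1 \<gamma>2
    using that by (simp add: tame_real_def tame_paths.comp)
  show ?thesis unfolding is_mpds_def using h1 h2 h3 h4 by blast
qed

abbreviation RS :: "'a precub \<Rightarrow> 'a gpt set" where
  "RS K \<equiv> {cell_map K 0 v (\<lambda>_. 0) | v. v \<in> cells K 0}"

lemma real_mpaths: "\<gamma> \<in> mpaths (realization K) \<longleftrightarrow>
   \<gamma> \<in> geo_dipaths K \<and> \<gamma> 0 \<in> RS K \<and> \<gamma> 1 \<in> RS K \<and> (\<exists>t\<in>{0..1}. \<gamma> t \<noteq> \<gamma> 0)"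
  by (auto simp: realization_def)

lemma unit_path_id: "\<gamma> \<in> extensional {0..1} \<Longrightarrow> unit_path (id \<circ> \<gamma>) = \<gamma>"
  unfolding unit_path_def by (simp add: extensional_restrict)

lemma real_M11:
  assumes g: "\<gamma> \<in> mpaths (realization K)" and ph: "\<phi> \<in> M11"
  shows "unit_path (\<gamma> \<circ> \<phi>) \<in> mpaths (realization K)"
proof -
  have gd: "\<gamma> \<in> geo_dipaths K" and e: "\<gamma> 0 \<in> RS K" "\<gamma> 1 \<in> RS K"
    and nc: "\<exists>t\<in>{0..1}. \<gamma> t \<noteq> \<gamma> 0" using g unfolding real_mpaths by auto
  obtain ps where ps: "good (PK K) ps" "len ps = 1" "\<gamma> = unit_path (moore ps)"
    using gd unfolding geo_dipaths_alt by blast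
  have phc: "continuous_on {0..1} \<phi>" and phm: "mono_on {0..1} \<phi>" and phr: "\<phi> ` {0..1} = {0..1}"
    using ph unfolding M11_def by auto
  have phr': "\<phi> t \<in> {0..1}" if "t \<in> {0..1}" for t using phr that by blast
  obtain qs where qs: "good (PK K) qs" "len qs = 1" "\<forall>t\<in>{0..1}. moore qs t = moore ps (\<phi> t)"
    using moore_reparam[OF rclosed_PK ps(1), of 1 \<phi>] phc phm phr' ps(2) by auto
  have eq: "unit_path (\<gamma> \<circ> \<phi>) = unit_path (moore qs)"
    by (rule unit_path_eqI) (use ps(3) phr' qs(3) in \<open>auto simp: unit_path_apply\<close>)
  have "unit_path (\<gamma> \<circ> \<phi>) \<in> geo_dipaths K" unfolding eq geo_dipaths_alt using qs by blast
  moreover have "unit_path (\<gamma> \<circ> \<phi>) 0 = \<gamma> 0" "unit_path (\<gamma> \<circ> \<phi>) 1 = \<gamma> 1"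
    using M11_ends[OF ph] by (simp_all add: unit_path_apply)
  moreover have "\<exists>s\<in>{0..1}. unit_path (\<gamma> \<circ> \<phi>) s \<noteq> unit_path (\<gamma> \<circ> \<phi>) 0"
  proof -
    obtain t where t: "t \<in> {0..1}" "\<gamma> t \<noteq> \<gamma> 0" using nc by blast
    then obtain s where s: "s \<in> {0..1}" "\<phi> s = t" using phr by (metis imageE)
    have "unit_path (\<gamma> \<circ> \<phi>) s = \<gamma> t" using s by (simp add: unit_path_apply)
    moreover have "unit_path (\<gamma> \<circ> \<phi>) 0 = \<gamma> 0" using M11_ends[OF ph] by (simp add: unit_path_apply)
    ultimately show ?thesis using s t by metis
  qed
  ultimately show ?thesis unfolding real_mpaths using e by auto
qed

lemma real_comp:
  assumes g1: "\<gamma>1 \<in> mpaths (realization K)" and g2: "\<gamma>2 \<in> mpaths (realization K)" and e: "\<gamma>1 1 = \<gamma>2 0"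
  shows "normcomp \<gamma>1 \<gamma>2 \<in> mpaths (realization K)"
proof -
  have gd1: "\<gamma>1 \<in> geo_dipaths K" and e1: "\<gamma>1 0 \<in> RS K"
    and nc: "\<exists>t\<in>{0..1}. \<gamma>1 t \<noteq> \<gamma>1 0" using g1 unfolding real_mpaths by auto
  have gd2: "\<gamma>2 \<in> geo_dipaths K" and e2: "\<gamma>2 1 \<in> RS K" using g2 unfolding real_mpaths by auto
  obtain ps1 where ps1: "good (PK K) ps1" "len ps1 = 1" "\<gamma>1 = unit_path (moore ps1)"
    using gd1 unfolding geo_dipaths_alt by blast
  obtain ps2 where ps2: "good (PK K) ps2" "len ps2 = 1" "\<gamma>2 = unit_path (moore ps2)"
    using gd2 unfolding geo_dipaths_alt by blast
  have "moore ps1 1 = moore ps2 0" using e ps1(3) ps2(3) by (simp add: unit_path_apply)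
  then obtain qs where qs: "good (PK K) qs" "len qs = 1" "normcomp \<gamma>1 \<gamma>2 = unit_path (moore qs)"
    using normcomp_moore[OF rclosed_PK ps1(1,2) ps2(1,2)] ps1(3) ps2(3) by blast
  have "normcomp \<gamma>1 \<gamma>2 \<in> geo_dipaths K" unfolding qs(3) geo_dipaths_alt using qs(1,2) by blast
  moreover have "\<exists>s\<in>{0..1}. normcomp \<gamma>1 \<gamma>2 s \<noteq> normcomp \<gamma>1 \<gamma>2 0"
  proof -
    obtain t where t: "t \<in> {0..1}" "\<gamma>1 t \<noteq> \<gamma>1 0" using nc by blast
    have "normcomp \<gamma>1 \<gamma>2 (t/2) = \<gamma>1 t" using t unfolding normcomp_def by (simp add: unit_path_apply)
    moreover have "t/2 \<in> {0..1}" using t by auto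
    ultimately show ?thesis using t normcomp_0[of \<gamma>1 \<gamma>2] by metis
  qed
  ultimately show ?thesis unfolding real_mpaths using e1 e2 normcomp_0 normcomp_1 by metis
qed

lemma is_mpds_real: "is_mpds (realization K)"
proof -
  have h1: "mstates (realization K) \<subseteq> topspace (mspace (realization K))"
    unfolding realization_def using cell_map_carrier[of _ K 0 "\<lambda>_. 0"]
    by (auto simp: topspace_geo cube_def)
  have h2: "\<gamma> \<in> extensional {0..1} \<and> continuous_map (top_of_set {0..1}) (mspace (realization K)) \<gamma> \<and>
        \<gamma> 0 \<in> mstates (realization K) \<and> \<gamma> 1 \<in> mstates (realization K)"
    if "\<gamma> \<in> mpaths (realization K)" for \<gamma>
  proof -
    have gd: "\<gamma> \<in> geo_dipaths K" and e: "\<gamma> 0 \<in> RS K" "\<gamma> 1 \<in> RS K"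
      using that unfolding real_mpaths by auto
    obtain ps where ps: "good (PK K) ps" "len ps = 1" "\<gamma> = unit_path (moore ps)"
      using gd unfolding geo_dipaths_alt by blast
    have "continuous_map (top_of_set {0..1}) (geo_top K) \<gamma>"
      unfolding ps(3) by (rule good_cont[OF ps(1) PK_cont ps(2)])
    then show ?thesis using e ps(3) by (simp add: realization_def unit_path_ext)
  qed
  have h3: "unit_path (\<gamma> \<circ> \<phi>) \<in> mpaths (realization K)"
    if "\<gamma> \<in> mpaths (realization K)" "\<phi> \<in> M11" for \<gamma> \<phi>
    using real_M11 that by blast
  have h4: "normcomp \<gamma>1 \<gamma>2 \<in> mpaths (realization K)"
    if "\<gamma>1 \<in> mpaths (realization K)" "\<gamma>2 \<in> mpaths (realization K)" "\<gamma>1 1 = \<gamma>2 0" for \<gamma>1 \<gamma>2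
    using real_comp that by blast
  show ?thesis unfolding is_mpds_def using h1 h2 h3 h4 by blast
qed

lemma tame_in_real:
  assumes K: "precubical K"
  shows "\<gamma> \<in> tame_paths K \<Longrightarrow> \<gamma> \<in> mpaths (realization K)"
proof (induction rule: tame_paths.induct)
  case (base c n \<gamma>)
  have dp: "dir_cube_path n 1 \<gamma>" and ends: "\<gamma> 0 \<in> verts n" "\<gamma> 1 \<in> verts n"
    using base(2) unfolding cube_mpds_def by auto
  let ?f = "cell_map K n c \<circ> \<gamma>"
  have "PK K 1 ?f" unfolding PK_def using base(1) dp by auto
  then have "good (PK K) [(1, ?f)]" by (simp add: good_def)
  moreover have "moore [(1, ?f)] = ?f" by (rule ext) simp
  moreover have "len [(1::real, ?f)] = 1" by simp
  ultimately have gd: "unit_path ?f \<in> geo_dipaths K" unfolding geo_dipaths_alt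
    by (metis (mono_tags, lifting) mem_Collect_eq)
  have "unit_path ?f 0 \<in> RS K" "unit_path ?f 1 \<in> RS K"
    using vertex_class[OF K base(1) ends(1)] vertex_class[OF K base(1) ends(2)]
    by (auto simp: unit_path_apply)
  moreover have "\<exists>t\<in>{0..1}. unit_path ?f t \<noteq> unit_path ?f 0"
    using base_nonconst[OF base(1) base(2)] by (auto simp: unit_path_apply)
  ultimately show ?case unfolding real_mpaths using gd by blast
next
  case (reparam \<gamma> \<phi>)
  then show ?case using real_M11 by blast
next
  case (comp \<gamma>1 \<gamma>2)
  then show ?case using real_comp by blast
qed

lemma mpds_tame_real:
  assumes K: "precubical K"
  shows "mpds_map (tame_real K) (realization K) id"
  unfolding mpds_map_def
proof (intro conjI is_mpds_tame is_mpds_real)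
  show "continuous_map (mspace (tame_real K)) (mspace (realization K)) id"
    by (simp add: tame_real_def realization_def)
  show "id ` mstates (tame_real K) \<subseteq> mstates (realization K)"
    unfolding tame_real_def realization_def using vertex_class[OF K] by force
  show "\<forall>\<gamma>\<in>mpaths (tame_real K). unit_path (id \<circ> \<gamma>) \<in> mpaths (realization K)"
  proof
    fix \<gamma> assume "\<gamma> \<in> mpaths (tame_real K)"
    then have t: "\<gamma> \<in> tame_paths K" by (simp add: tame_real_def)
    have "unit_path (id \<circ> \<gamma>) = \<gamma>" using tame_props[OF t] unit_path_id by blast
    then show "unit_path (id \<circ> \<gamma>) \<in> mpaths (realization K)" using tame_in_real[OF K t] by simp
  qed
qed

lemma PS_cong: "PS X l f \<Longrightarrow> (\<And>t. t \<in> {0..l} \<Longrightarrow> g t = f t) \<Longrightarrow> PS X l g"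
  unfolding PS_def by auto

lemma good_mono: "good P ps \<Longrightarrow> (\<And>l f. P l f \<Longrightarrow> Q l f) \<Longrightarrow> good Q ps"
  unfolding good_def by auto

lemma real_to_tame:
  assumes K: "precubical K" and g: "\<gamma> \<in> mpaths (realization K)"
  shows "\<exists>qs. good (PS (tame_real K)) qs \<and> len qs = 1 \<and> (\<forall>t\<in>{0..1}. moore qs t = \<gamma> t)"
proof -
  have gd: "\<gamma> \<in> geo_dipaths K" and nc: "\<exists>t\<in>{0..1}. \<gamma> t \<noteq> \<gamma> 0"
    using g unfolding real_mpaths by auto
  obtain ps where ps: "good (PK K) ps" "len ps = 1" "\<gamma> = unit_path (moore ps)"
    using gd unfolding geo_dipaths_alt by blast
  have pc: "\<forall>(l, f)\<in>set ps. l > 0 \<and> (PS (tame_real K) l f \<or> cpiece l f)"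
  proof (intro ballI, clarify)
    fix l f assume lf: "(l, f) \<in> set ps"
    have l: "l > 0" and P: "PK K l f" using ps(1) lf unfolding good_def by auto
    obtain n c \<rho> where c: "c \<in> cells K n" and dp: "dir_cube_path n l \<rho>"
      and f: "\<forall>t\<in>{0..l}. f t = cell_map K n c (\<rho> t)"
      using P unfolding PK_def by blast
    show "l > 0 \<and> (PS (tame_real K) l f \<or> cpiece l f)"
    proof (cases "n = 0")
      case True
      have z: "\<rho> t = (\<lambda>_. 0)" if "t \<in> {0..l}" for t
      proof -
        have "\<rho> t \<in> cube n" using dp that unfolding dir_cube_path_def by blast
        then show ?thesis using True unfolding cube_def by auto
      qed
      have "cpiece l f" unfolding cpiece_def
      proof
        fix t assume t: "t \<in> {0..l}"
        have t0: "(0::real) \<in> {0..l}" using l by auto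
        have "f t = cell_map K n c (\<lambda>_. 0)" using f t z by simp
        moreover have "f 0 = cell_map K n c (\<lambda>_. 0)" using f t0 z by simp
        ultimately show "f t = f 0" by simp
      qed
      then show ?thesis using l by simp
    next
      case False
      then have "n \<ge> 1" by simp
      from tame_piece[OF c this dp l] have "PS (tame_real K) l f"
        by (rule PS_cong) (use f in auto)
      then show ?thesis using l by simp
    qed
  qed
  have ex: "\<exists>(l, f)\<in>set ps. PS (tame_real K) l f"
  proof (rule ccontr)
    assume "\<not> (\<exists>(l, f)\<in>set ps. PS (tame_real K) l f)"
    then have "\<forall>(l, f)\<in>set ps. l > 0 \<and> cpiece l f" using pc by auto
    then have "\<forall>t\<in>{0..len ps}. moore ps t = snd (hd ps) 0"
      using moore_const_list[of ps] ps(1) unfolding good_def by blast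
    then have "\<forall>t\<in>{0..1}. \<gamma> t = \<gamma> 0" using ps(2,3) by (simp add: unit_path_apply)
    then show False using nc by blast
  qed
  obtain qs where qs: "good (PS (tame_real K)) qs" "len qs = len ps" "\<forall>t\<in>{0..len ps}. moore qs t = moore ps t"
    using moore_absorb[OF rclosed_PS, of ps] ps(1) pc ex unfolding good_def by blast
  then show ?thesis using ps(2,3) by (auto simp: unit_path_apply)
qed

lemma Sp_real_sub:
  assumes K: "precubical K" and g: "\<gamma> \<in> dpaths (Sp (realization K))"
  shows "\<gamma> \<in> dpaths (Sp (tame_real K))"
proof -
  have ms: "mspace (realization K) = mspace (tame_real K)" by (simp add: realization_def tame_real_def)
  consider x where "x \<in> topspace (mspace (realization K))" "\<gamma> = unit_path (\<lambda>_. x)"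
    | ps where "good (PS (realization K)) ps" "len ps = 1" "\<gamma> = unit_path (moore ps)"
    using g unfolding dpaths_Sp by blast
  then show ?thesis
  proof cases
    case 1 then show ?thesis unfolding dpaths_Sp using ms by auto
  next
    case (2 ps)
    have pieces: "\<forall>(l, f)\<in>set ps. l > 0 \<and>
        (\<exists>qs. good (PS (tame_real K)) qs \<and> len qs = l \<and> (\<forall>t\<in>{0..l}. moore qs t = f t))"
    proof (intro ballI, clarify)
      fix l f assume lf: "(l, f) \<in> set ps"
      have l: "l > 0" and P: "PS (realization K) l f" using 2(1) lf unfolding good_def by auto
      obtain \<gamma>' \<phi> where g': "\<gamma>' \<in> mpaths (realization K)" and ph: "\<phi> \<in> I1"
        and f: "\<forall>t\<in>{0..l}. f t = \<gamma>' (\<phi> (t / l))"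
        using P unfolding PS_def by blast
      obtain q where q: "good (PS (tame_real K)) q" "len q = 1" "\<forall>t\<in>{0..1}. moore q t = \<gamma>' t"
        using real_to_tame[OF K g'] by blast
      have phc: "continuous_on {0..1} \<phi>" and phm: "mono_on {0..1} \<phi>" and phr: "\<phi> ` {0..1} \<subseteq> {0..1}"
        using ph unfolding I1_def by auto
      have tl: "t / l \<in> {0..1}" if "t \<in> {0..l}" for t using that l by auto
      have c: "continuous_on {0..l} (\<lambda>t. \<phi> (t / l))"
        by (rule continuous_on_compose2[OF phc]) (use tl l in \<open>auto intro!: continuous_intros\<close>)
      have m: "mono_on {0..l} (\<lambda>t. \<phi> (t / l))"
      proof (rule mono_onI)
        fix r s assume rs: "r \<in> {0..l}" "s \<in> {0..l}" "r \<le> s"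
        then have "r / l \<le> s / l" using l by (simp add: divide_right_mono)
        then show "\<phi> (r / l) \<le> \<phi> (s / l)" by (rule mono_onD[OF phm tl[OF rs(1)] tl[OF rs(2)]])
      qed
      have r: "\<phi> (t / l) \<in> {0..len q}" if "t \<in> {0..l}" for t
      proof -
        have "\<phi> (t / l) \<in> {0..1}" using phr tl[OF that] by blast
        then show ?thesis using q(2) by simp
      qed
      obtain q' where q': "good (PS (tame_real K)) q'" "len q' = l"
        "\<forall>t\<in>{0..l}. moore q' t = moore q (\<phi> (t / l))"
        using moore_reparam[OF rclosed_PS q(1) l c m r] by blast
      have "\<forall>t\<in>{0..l}. moore q' t = f t"
      proof
        fix t assume t: "t \<in> {0..l}"
        have "\<phi> (t / l) \<in> {0..1}" using phr tl[OF t] by blast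
        then show "moore q' t = f t" using q'(3) q(3) f t by simp
      qed
      then show "l > 0 \<and> (\<exists>qs. good (PS (tame_real K)) qs \<and> len qs = l \<and> (\<forall>t\<in>{0..l}. moore qs t = f t))"
        using l q'(1,2) by blast
    qed
    obtain qs where qs: "good (PS (tame_real K)) qs" "len qs = len ps" "\<forall>t\<in>{0..len ps}. moore qs t = moore ps t"
      using moore_flatten[OF _ _ pieces] 2(1) unfolding good_def by blast
    have "\<gamma> = unit_path (moore qs)"
      unfolding 2(3) by (rule unit_path_eqI) (use qs(3) 2(2) in auto)
    then show ?thesis unfolding dpaths_Sp using qs 2(2) by auto
  qed
qed

lemma Sp_tame_sub:
  assumes K: "precubical K" and g: "\<gamma> \<in> dpaths (Sp (tame_real K))"
  shows "\<gamma> \<in> dpaths (Sp (realization K))"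
proof -
  have ms: "mspace (realization K) = mspace (tame_real K)" by (simp add: realization_def tame_real_def)
  have PSm: "PS (realization K) l f" if "PS (tame_real K) l f" for l f
  proof -
    have "mpaths (tame_real K) \<subseteq> mpaths (realization K)"
      using tame_in_real[OF K] by (auto simp: tame_real_def)
    then show ?thesis using that unfolding PS_def by blast
  qed
  consider x where "x \<in> topspace (mspace (tame_real K))" "\<gamma> = unit_path (\<lambda>_. x)"
    | ps where "good (PS (tame_real K)) ps" "len ps = 1" "\<gamma> = unit_path (moore ps)"
    using g unfolding dpaths_Sp by blast
  then show ?thesis
  proof cases
    case 1 then show ?thesis unfolding dpaths_Sp using ms by auto
  next
    case (2 ps)
    have "good (PS (realization K)) ps" using good_mono[OF 2(1) PSm] .
    then show ?thesis unfolding dpaths_Sp using 2 by auto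
  qed
qed

theorem proposition3p10:
  fixes K :: "'a precub"
  assumes "precubical K"
  shows "mpds_map (tame_real K) (realization K) id \<and>
         dspace_iso (Sp (tame_real K)) (Sp (realization K)) id"
proof
  show "mpds_map (tame_real K) (realization K) id" by (rule mpds_tame_real[OF assms])
  have d1: "is_dspace (Sp (tame_real K))" by (rule is_dspace_Sp[OF is_mpds_tame])
  have d2: "is_dspace (Sp (realization K))" by (rule is_dspace_Sp[OF is_mpds_real])
  have ms: "mspace (realization K) = mspace (tame_real K)" by (simp add: realization_def tame_real_def)
  have hm: "homeomorphic_maps (dtop (Sp (tame_real K))) (dtop (Sp (realization K))) id id"
    using ms by (simp add: homeomorphic_maps_id)
  have p1: "\<forall>\<gamma>\<in>dpaths (Sp (tame_real K)). unit_path (id \<circ> \<gamma>) \<in> dpaths (Sp (realization K))"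
  proof
    fix \<gamma> assume g: "\<gamma> \<in> dpaths (Sp (tame_real K))"
    then have "\<gamma> \<in> extensional {0..1}" using d1 unfolding is_dspace_def by blast
    then have "unit_path (id \<circ> \<gamma>) = \<gamma>" by (rule unit_path_id)
    then show "unit_path (id \<circ> \<gamma>) \<in> dpaths (Sp (realization K))"
      using Sp_tame_sub[OF assms g] by simp
  qed
  have p2: "\<forall>\<gamma>\<in>dpaths (Sp (realization K)). unit_path (id \<circ> \<gamma>) \<in> dpaths (Sp (tame_real K))"
  proof
    fix \<gamma> assume g: "\<gamma> \<in> dpaths (Sp (realization K))"
    then have "\<gamma> \<in> extensional {0..1}" using d2 unfolding is_dspace_def by blast
    then have "unit_path (id \<circ> \<gamma>) = \<gamma>" by (rule unit_path_id)
    then show "unit_path (id \<circ> \<gamma>) \<in> dpaths (Sp (tame_real K))"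
      using Sp_real_sub[OF assms g] by simp
  qed
  show "dspace_iso (Sp (tame_real K)) (Sp (realization K)) id"
    unfolding dspace_iso_def using d1 d2 hm p1 p2 by blast
qed

end
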